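(* Assume the setting described in the context. Suppose $A=\mathbb E[\mathbf P^H\mathbf P]$ is invertible, that $\|\mathbf P\|\le B_P$ almost surely for some constant $B_P<\infty$, and that $\langle \mathbf X\rangle_2<\infty$ and $\langle \mathbf E\rangle_2<\infty$. Then, for fixed $p,q$, $$\mathbb E\|\mu_n-\mu_0\| = O\!\left(\frac{1}{\sqrt n}\right)\quad (n\to\infty).$$ In particular $\mu_n$ is a consistent estimator of $\mu_0$.
   Context: Setting: $\mathbf X$ is a random vector in $\mathbb C^p$ with $\mathbb E[\mathbf X]=\mu_0$ and covariance matrix $\Sigma_0$; $\mathbf P$ is a random $q\times p$ complex matrix; $\mathbf E$ is a random vector in $\mathbb C^q$ with $\mathbb E[\mathbf E]=0$ and covariance $\sigma^2 I_q$ ($\sigma^2$ known); $\mathbf X,\mathbf P,\mathbf E$ are independent and $\mathbf I=\mathbf P\mathbf X+\mathbf E$. Let $(\mathbf X_s,\mathbf P_s,\mathbf E_s)$, $s=1,\dots,n$, be i.i.d. copies of $(\mathbf X,\mathbf P,\mathbf E)$ and $\mathbf I_s=\mathbf P_s\mathbf X_s+\mathbf E_s$; only $(\mathbf I_s,\mathbf P_s)$ are observed. Norms $\|\cdot\|$ are the Euclidean norm on vectors and the operator norm on matrices/operators; $^H$ is conjugate transpose. Define $A_n=\frac1n\sum_{s}P_s^HP_s$, $b_n=\frac1n\sum_s P_s^HI_s$, $A=\mathbb E[\mathbf P^H\mathbf P]$. The estimator is $\mu_n=A_n^{-1}b_n$ if $A_n$ is invertible and $\|A_n^{-1}\|\le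 2\|A^{-1}\|$, and $\mu_n=0$ otherwise. For a random vector $\mathbf Y$, $\langle \mathbf Y\rangle_j=\big(\mathbb E\|\mathbf Y-\mathbb E\mathbf Y\|^j\big)^{1/j}$. *)

theory Defs
  imports "HOL-Probability.Probability" "HOL-Library.Landau_Symbols"
begin

definition cadj :: "complex^'n^'m \<Rightarrow> complex^'m^'n" where
  "cadj M = (\<chi> i j. cnj (M $ j $ i))"

definition opnorm :: "complex^'n^'m \<Rightarrow> real" where
  "opnorm M = onorm (\<lambda>x. M *v x)"

definition A_n :: "(nat \<Rightarrow> 'w \<Rightarrow> complex^'p^'q) \<Rightarrow> nat \<Rightarrow> 'w \<Rightarrow> complex^'p^'p" where
  "A_n Ps n \<omega> = (1 / real n) *\<^sub>R (\<Sum>s<n. cadj (Ps s \<omega>) ** Ps s \<omega>)"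

definition b_n :: "(nat \<Rightarrow> 'w \<Rightarrow> complex^'p^'q) \<Rightarrow> (nat \<Rightarrow> 'w \<Rightarrow> complex^'q) \<Rightarrow> nat \<Rightarrow> 'w \<Rightarrow> complex^'p" where
  "b_n Ps Is n \<omega> = (1 / real n) *\<^sub>R (\<Sum>s<n. cadj (Ps s \<omega>) *v Is s \<omega>)"

definition mu_n :: "complex^'p^'p \<Rightarrow> (nat \<Rightarrow> 'w \<Rightarrow> complex^'p^'q) \<Rightarrow> (nat \<Rightarrow> 'w \<Rightarrow> complex^'q)
                    \<Rightarrow> nat \<Rightarrow> 'w \<Rightarrow> complex^'p" where
  "mu_n A Ps Is n \<omega> =
     (if invertible (A_n Ps n \<omega>) \<and> opnorm (matrix_inv (A_n Ps n \<omega>)) \<le> 2 * opnorm (matrix_inv A)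
      then matrix_inv (A_n Ps n \<omega>) *v b_n Ps Is n \<omega> else 0)"

end

theory Submission
  imports Defs
begin

lemma bl_mv: "bounded_linear ((*v) (N::complex^'n^'m))" by simp

lemma opnorm_mv: "norm (N *v v) \<le> opnorm N * norm (v::complex^'n)"
  unfolding opnorm_def using onorm[OF bl_mv] by blast

lemma opnorm_nonneg: "0 \<le> opnorm (N::complex^'n^'m)"
  unfolding opnorm_def by (rule onorm_pos_le[OF bl_mv])

lemma opnorm_leI: "(\<And>v. norm (N *v v) \<le> b * norm v) \<Longrightarrow> opnorm (N::complex^'n^'m) \<le> b"
  unfolding opnorm_def by (rule onorm_le) auto

lemma norm_le_sum_cart: "norm (x::'a::real_normed_vector^'n) \<le> (\<Sum>i\<in>UNIV. norm (x$i))"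
  by (simp add: norm_vec_def L2_set_le_sum)

lemma norm_axis_c: "norm (axis (j::'n::finite) (1::complex)) = 1"
proof -
  have eq: "(\<lambda>i. (norm (axis j (1::complex) $ i))\<^sup>2) = (\<lambda>i. if i = j then 1 else 0)"
    by (auto simp: axis_def)
  have "(\<Sum>i\<in>UNIV. (norm (axis j (1::complex) $ i))\<^sup>2) = 1" by (simp only: eq) simp
  then show ?thesis by (simp add: norm_vec_def L2_set_def)
qed

lemma opnorm_le_norm: "opnorm (N::complex^'n^'m) \<le> real CARD('m) * real CARD('n) * norm N"
proof (rule opnorm_leI)
  fix v :: "complex^'n"
  have "norm (N *v v) \<le> (\<Sum>i\<in>UNIV. norm ((N *v v)$i))" by (rule norm_le_sum_cart)
  also have "\<dots> \<le> (\<Sum>i::'m\<in>UNIV. real CARD('n) * norm N * norm v)"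
  proof (rule sum_mono)
    fix i
    have "norm ((N *v v)$i) = norm (\<Sum>j\<in>UNIV. N$i$j * v$j)" by (simp add: matrix_vector_mult_def)
    also have "\<dots> \<le> (\<Sum>j\<in>UNIV. norm (N$i$j * v$j))" by (rule norm_sum)
    also have "\<dots> \<le> (\<Sum>j::'n\<in>UNIV. norm N * norm v)"
    proof (rule sum_mono)
      fix j
      have "norm (N$i$j) \<le> norm N" by (meson Finite_Cartesian_Product.norm_nth_le order_trans)
      moreover have "norm (v$j) \<le> norm v" by (rule Finite_Cartesian_Product.norm_nth_le)
      ultimately show "norm (N$i$j * v$j) \<le> norm N * norm v"
        by (simp add: norm_mult mult_mono)
    qed
    finally show "norm ((N *v v)$i) \<le> real CARD('n) * norm N * norm v" by simp
  qed
  finally show "norm (N *v v) \<le> real CARD('m) * real CARD('n) * norm N * norm v" by simp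
qed

lemma norm_le_opnorm: "norm (N::complex^'n^'m) \<le> real CARD('m) * real CARD('n) * opnorm N"
proof -
  have "norm N \<le> (\<Sum>i\<in>UNIV. norm (N$i))" by (rule norm_le_sum_cart)
  also have "\<dots> \<le> (\<Sum>i::'m\<in>UNIV. real CARD('n) * opnorm N)"
  proof (rule sum_mono)
    fix i
    have "norm (N$i) \<le> (\<Sum>j\<in>UNIV. norm (N$i$j))" by (rule norm_le_sum_cart)
    also have "\<dots> \<le> (\<Sum>j::'n\<in>UNIV. opnorm N)"
    proof (rule sum_mono)
      fix j
      have "N$i$j = (N *v axis j 1)$i"
        by (simp add: matrix_vector_mult_def axis_def if_distrib cong: if_cong)
      then have "norm (N$i$j) \<le> norm (N *v axis j 1)" by (metis Finite_Cartesian_Product.norm_nth_le)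
      also have "\<dots> \<le> opnorm N * norm (axis j (1::complex))" by (rule opnorm_mv)
      finally show "norm (N$i$j) \<le> opnorm N" by (simp add: norm_axis_c)
    qed
    finally show "norm (N$i) \<le> real CARD('n) * opnorm N" by simp
  qed
  finally show ?thesis by simp
qed

lemma opnorm_mult: "opnorm ((N::complex^'n^'m) ** (L::complex^'k^'n)) \<le> opnorm N * opnorm L"
  by (rule opnorm_leI) (metis (no_types, opaque_lifting) matrix_vector_mul_assoc opnorm_mv opnorm_nonneg mult.assoc mult_left_mono order_trans)

lemma opnorm_diff_le: "opnorm (N::complex^'n^'m) \<le> opnorm L + opnorm (N - L)"
proof (rule opnorm_leI)
  fix v
  have "N *v v = L *v v + (N - L) *v v" by (simp add: matrix_vector_mult_diff_rdistrib)
  then have "norm (N *v v) \<le> norm (L *v v) + norm ((N - L) *v v)" by (metis norm_triangle_ineq)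
  also have "\<dots> \<le> opnorm L * norm v + opnorm (N - L) * norm v" by (intro add_mono opnorm_mv)
  finally show "norm (N *v v) \<le> (opnorm L + opnorm (N - L)) * norm v" by (simp add: algebra_simps)
qed

lemma matrix_inv_works:
  assumes "invertible (A::'a::semiring_1^'n^'m)"
  shows "A ** matrix_inv A = mat 1" "matrix_inv A ** A = mat 1"
proof -
  have "\<exists>A'. A ** A' = mat 1 \<and> A' ** A = mat 1" using assms by (simp add: invertible_def)
  from someI_ex[OF this] show "A ** matrix_inv A = mat 1" "matrix_inv A ** A = mat 1"
    by (simp_all add: matrix_inv_def)
qed

lemma matrix_inv_noninv:
  assumes "\<not> invertible (A::'a::semiring_1^'n^'m)"
  shows "matrix_inv A = (SOME A'::'a^'m^'n. False)"
proof -
  have "(\<lambda>A'::'a^'m^'n. A ** A' = mat 1 \<and> A' ** A = mat 1) = (\<lambda>_. False)"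
    using assms by (auto simp: invertible_def)
  then show ?thesis by (simp add: matrix_inv_def)
qed

lemma perturb:
  fixes A0 M :: "complex^'n^'n"
  assumes inv: "invertible A0" and small: "opnorm (matrix_inv A0) * opnorm (M - A0) \<le> 1/2"
  shows "invertible M" "opnorm (matrix_inv M) \<le> 2 * opnorm (matrix_inv A0)"
proof -
  let ?c = "opnorm (matrix_inv A0)"
  have key: "norm v \<le> 2 * ?c * norm (M *v v)" for v
  proof -
    have "v = matrix_inv A0 *v (A0 *v v)"
      by (simp add: matrix_vector_mul_assoc matrix_inv_works[OF inv])
    then have "norm v \<le> ?c * norm (A0 *v v)" by (metis opnorm_mv)
    also have "A0 *v v = M *v v - (M - A0) *v v" by (simp add: matrix_vector_mult_diff_rdistrib)
    also have "?c * norm (M *v v - (M - A0) *v v) \<le> ?c * (norm (M *v v) + opnorm (M - A0) * norm v)"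
      by (intro mult_left_mono opnorm_nonneg order_trans[OF norm_triangle_ineq4] add_left_mono opnorm_mv)
    also have "\<dots> = ?c * norm (M *v v) + (?c * opnorm (M - A0)) * norm v" by (simp add: algebra_simps)
    also have "\<dots> \<le> ?c * norm (M *v v) + (1/2) * norm v"
      by (intro add_left_mono mult_right_mono small) simp
    finally show ?thesis by simp
  qed
  have "\<forall>x. M *v x = 0 \<longrightarrow> x = 0" using key by (metis mult_zero_right norm_le_zero_iff norm_zero)
  then show invM: "invertible M"
    using matrix_left_invertible_ker invertible_left_inverse by blast
  show "opnorm (matrix_inv M) \<le> 2 * ?c"
  proof (rule opnorm_leI)
    fix w
    have "M *v (matrix_inv M *v w) = w" by (simp add: matrix_vector_mul_assoc matrix_inv_works[OF invM])
    then show "norm (matrix_inv M *v w) \<le> 2 * ?c * norm w" using key by metis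
  qed
qed

definition Gfun :: "real \<Rightarrow> complex^'n^'n \<Rightarrow> complex^'n \<Rightarrow> complex^'n" where
  "Gfun c M b = (if invertible M \<and> opnorm (matrix_inv M) \<le> c then matrix_inv M *v b else 0)"

lemma key_bound:
  fixes A0 M :: "complex^'n^'n"
  assumes inv: "invertible A0"
  defines "c \<equiv> opnorm (matrix_inv A0)" and "K \<equiv> real CARD('n) * real CARD('n)"
  shows "norm (Gfun (2*c) M b - mu) \<le> 2*c*norm (b - M *v mu) + 4*c^2*K^2*norm mu*(norm (M - A0))^2"
proof (cases "invertible M \<and> opnorm (matrix_inv M) \<le> 2*c")
  case True
  then have "Gfun (2*c) M b - mu = matrix_inv M *v (b - M *v mu)"
    by (simp add: Gfun_def matrix_vector_mult_diff_distrib matrix_vector_mul_assoc matrix_inv_works)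
  then have "norm (Gfun (2*c) M b - mu) \<le> opnorm (matrix_inv M) * norm (b - M *v mu)"
    by (simp add: opnorm_mv)
  also have "\<dots> \<le> 2*c*norm (b - M *v mu)" using True by (simp add: mult_right_mono)
  moreover have "0 \<le> 4*c^2*K^2*norm mu*(norm (M - A0))^2" by (intro mult_nonneg_nonneg) auto
  ultimately show ?thesis by linarith
next
  case False
  then have "\<not> c * opnorm (M - A0) \<le> 1/2" using perturb[OF inv] c_def by blast
  then have h: "1/2 < c * opnorm (M - A0)" by simp
  have c0: "0 \<le> c" by (simp add: c_def opnorm_nonneg)
  have "c * opnorm (M - A0) \<le> c * (K * norm (M - A0))"
    using opnorm_le_norm[of "M - A0"] c0 by (simp add: K_def mult_left_mono)
  with h have h2: "1/2 < c * K * norm (M - A0)" by (simp add: mult.assoc)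
  then have "1 < (2 * (c * K * norm (M - A0)))^2"
    using one_less_power[of "2 * (c * K * norm (M - A0))" 2] by simp
  then have "1 < 4*c^2*K^2*(norm (M - A0))^2" by (simp add: power_mult_distrib)
  then have "norm mu * 1 \<le> norm mu * (4*c^2*K^2*(norm (M - A0))^2)"
    by (intro mult_left_mono) auto
  then have "norm mu \<le> 4*c^2*K^2*norm mu*(norm (M - A0))^2" by (simp add: algebra_simps)
  moreover have "Gfun (2*c) M b = 0" using False unfolding Gfun_def by auto
  moreover have "0 \<le> 2*c*norm (b - M *v mu)" using c0 by simp
  ultimately show ?thesis by simp
qed

lemma small_aux:
  assumes "0 \<le> (c::real)" "0 < K" "norm (x::'a::real_normed_vector) < d"
  shows "c * (K * norm x) \<le> (c*K + 1) * d"
proof -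
  have d0: "0 \<le> d" using assms(3) norm_ge_zero[of x] by linarith
  have "c * (K * norm x) = (c*K) * norm x" by simp
  also have "\<dots> \<le> (c*K) * d" using assms by (intro mult_left_mono) auto
  also have "\<dots> \<le> (c*K + 1) * d" using d0 by (simp add: distrib_right)
  finally show ?thesis .
qed

lemma open_invertible: "open {M::complex^'n^'n. invertible M}"
proof (rule openI)
  fix M0 :: "complex^'n^'n" assume "M0 \<in> {M. invertible M}"
  then have inv: "invertible M0" by simp
  define c where "c = opnorm (matrix_inv M0)"
  define K where "K = real CARD('n) * real CARD('n)"
  have c0: "0 \<le> c" by (simp add: c_def opnorm_nonneg)
  have K0: "0 < K" by (simp add: K_def)
  define d where "d = 1 / (2 * (c * K + 1))"
  have cK: "0 \<le> c * K" using c0 K0 by simp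
  have d0: "0 < d" using cK by (simp add: d_def add_nonneg_pos)
  show "\<exists>e>0. ball M0 e \<subseteq> {M. invertible M}"
  proof (intro exI conjI)
    show "0 < d" by fact
    show "ball M0 d \<subseteq> {M. invertible M}"
    proof
      fix M assume "M \<in> ball M0 d"
      then have nd: "norm (M - M0) < d" by (simp add: dist_norm norm_minus_commute)
      have "c * opnorm (M - M0) \<le> c * (K * norm (M - M0))"
        using opnorm_le_norm[of "M - M0"] c0 by (simp add: K_def mult_left_mono)
      also have "\<dots> \<le> (c*K + 1) * d" using small_aux[OF c0 K0 nd] .
      also have "\<dots> = 1/2" using cK by (simp add: d_def)
      finally show "M \<in> {M. invertible M}" using perturb(1)[OF inv] c_def by auto
    qed
  qed
qed

lemma inv_diff_bound:
  fixes M M0 :: "complex^'n^'n"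
  assumes "invertible M" "invertible M0"
  shows "opnorm (matrix_inv M - matrix_inv M0) \<le> opnorm (matrix_inv M) * opnorm (M - M0) * opnorm (matrix_inv M0)"
proof (rule opnorm_leI)
  fix w
  have "(matrix_inv M - matrix_inv M0) *v w = matrix_inv M *v ((M0 - M) *v (matrix_inv M0 *v w))"
  proof -
    have "matrix_inv M *v (M0 *v (matrix_inv M0 *v w)) = matrix_inv M *v w"
      by (simp add: matrix_vector_mul_assoc matrix_inv_works[OF assms(2)])
    moreover have "matrix_inv M *v (M *v (matrix_inv M0 *v w)) = matrix_inv M0 *v w"
      by (simp only: matrix_vector_mul_assoc[of "matrix_inv M" M] matrix_inv_works[OF assms(1)] matrix_vector_mul_lid)
    ultimately show ?thesis
      by (simp only: matrix_vector_mult_diff_rdistrib matrix_vector_mult_diff_distrib)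
  qed
  then have "norm ((matrix_inv M - matrix_inv M0) *v w)
     \<le> opnorm (matrix_inv M) * norm ((M0 - M) *v (matrix_inv M0 *v w))" by (simp add: opnorm_mv)
  also have "\<dots> \<le> opnorm (matrix_inv M) * (opnorm (M0 - M) * norm (matrix_inv M0 *v w))"
    by (intro mult_left_mono opnorm_mv opnorm_nonneg)
  also have "\<dots> \<le> opnorm (matrix_inv M) * (opnorm (M0 - M) * (opnorm (matrix_inv M0) * norm w))"
    by (intro mult_left_mono opnorm_mv opnorm_nonneg)
  also have "opnorm (M0 - M) = opnorm (M - M0)"
  proof -
    have "(\<lambda>x. (M0 - M) *v x) = (\<lambda>x. - ((M - M0) *v x))"
      by (simp add: fun_eq_iff matrix_vector_mult_diff_rdistrib)
    then show ?thesis unfolding opnorm_def by (simp add: onorm_neg)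
  qed
  finally show "norm ((matrix_inv M - matrix_inv M0) *v w)
     \<le> opnorm (matrix_inv M) * opnorm (M - M0) * opnorm (matrix_inv M0) * norm w"
    by (simp add: mult.assoc)
qed

lemma continuous_matrix_inv: "continuous_on {M::complex^'n^'n. invertible M} matrix_inv"
  unfolding continuous_on_iff
proof (intro ballI allI impI)
  fix M0 :: "complex^'n^'n" and e :: real assume "M0 \<in> {M. invertible M}" "0 < e"
  then have inv: "invertible M0" by simp
  define c where "c = opnorm (matrix_inv M0)"
  define K where "K = real CARD('n) * real CARD('n)"
  have c0: "0 \<le> c" by (simp add: c_def opnorm_nonneg)
  have K0: "0 < K" by (simp add: K_def)
  define L where "L = 2*K*K*c*c"
  have cK: "0 \<le> c * K" using c0 K0 by simp
  have L0: "0 \<le> L" using c0 K0 by (simp add: L_def)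
  define d where "d = min (1 / (2 * (c * K + 1))) (e / (L + 1))"
  have d0: "0 < d" using cK L0 \<open>0 < e\<close> by (simp add: d_def add_nonneg_pos)
  show "\<exists>d>0. \<forall>M\<in>{M. invertible M}. dist M M0 < d \<longrightarrow> dist (matrix_inv M) (matrix_inv M0) < e"
  proof (intro exI conjI ballI impI)
    show "0 < d" by fact
    fix M assume "M \<in> {M. invertible M}" "dist M M0 < d"
    then have invM: "invertible M" and nd: "norm (M - M0) < d" by (simp_all add: dist_norm)
    have o1: "opnorm (M - M0) \<le> K * norm (M - M0)"
      using opnorm_le_norm[of "M - M0"] by (simp add: K_def)
    have nd1: "norm (M - M0) < 1 / (2 * (c * K + 1))" using nd by (simp add: d_def)
    have "c * opnorm (M - M0) \<le> c * (K * norm (M - M0))"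
      using o1 c0 by (simp add: mult_left_mono)
    also have "\<dots> \<le> (c*K + 1) * (1 / (2 * (c * K + 1)))" using small_aux[OF c0 K0 nd1] .
    also have "\<dots> = 1/2" using cK by simp
    finally have small: "c * opnorm (M - M0) \<le> 1/2" .
    note P = perturb[OF inv, folded c_def, OF small]
    have "norm (matrix_inv M - matrix_inv M0) \<le> K * opnorm (matrix_inv M - matrix_inv M0)"
      using norm_le_opnorm[of "matrix_inv M - matrix_inv M0"] by (simp add: K_def)
    also have "\<dots> \<le> K * (2*c * (K * norm (M - M0)) * c)"
    proof -
      have "opnorm (matrix_inv M - matrix_inv M0) \<le> opnorm (matrix_inv M) * opnorm (M - M0) * c"
        using inv_diff_bound[OF invM inv] c_def by simp
      also have "\<dots> \<le> (2*c * (K * norm (M - M0))) * c"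
        using P(2) o1 c0 by (intro mult_right_mono mult_mono) (auto simp: opnorm_nonneg)
      finally show ?thesis using K0 by (simp add: mult_left_mono)
    qed
    also have "\<dots> = L * norm (M - M0)" by (simp add: L_def algebra_simps)
    also have "\<dots> \<le> L * d" using nd L0 by (intro mult_left_mono) auto
    also have "\<dots> \<le> L * (e / (L + 1))" using L0 by (intro mult_left_mono) (auto simp: d_def)
    also have "\<dots> < e" using L0 \<open>0<e\<close> by (simp add: field_simps)
    finally show "dist (matrix_inv M) (matrix_inv M0) < e" by (simp add: dist_norm)
  qed
qed

lemma opnorm_minus_commute: "opnorm ((M::complex^'n^'m) - N) = opnorm (N - M)"
proof -
  have "(\<lambda>x. (M - N) *v x) = (\<lambda>x. - ((N - M) *v x))"
    by (simp add: fun_eq_iff matrix_vector_mult_diff_rdistrib)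
  then show ?thesis unfolding opnorm_def by (simp add: onorm_neg)
qed

lemma continuous_opnorm: "continuous_on UNIV (opnorm :: complex^'n^'m \<Rightarrow> real)"
  unfolding continuous_on_iff
proof (intro ballI allI impI)
  fix M0 :: "complex^'n^'m" and e :: real assume "0 < e"
  define K where "K = real CARD('m) * real CARD('n)"
  have K0: "0 < K" by (simp add: K_def)
  show "\<exists>d>0. \<forall>M\<in>UNIV. dist M M0 < d \<longrightarrow> dist (opnorm M) (opnorm M0) < e"
  proof (intro exI conjI ballI impI)
    show "0 < e / K" using K0 \<open>0<e\<close> by simp
    fix M :: "complex^'n^'m" assume "dist M M0 < e / K"
    then have nd: "norm (M - M0) < e / K" by (simp add: dist_norm)
    have "\<bar>opnorm M - opnorm M0\<bar> \<le> opnorm (M - M0)"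
      using opnorm_diff_le[of M M0] opnorm_diff_le[of M0 M] opnorm_minus_commute[of M0 M] by linarith
    also have "\<dots> \<le> K * norm (M - M0)" using opnorm_le_norm[of "M - M0"] by (simp add: K_def)
    also have "\<dots> < K * (e / K)" using nd K0 by (intro mult_strict_left_mono) auto
    also have "\<dots> = e" using K0 by simp
    finally show "dist (opnorm M) (opnorm M0) < e" by (simp add: dist_real_def)
  qed
qed

lemma borel_opnorm[measurable]: "(opnorm :: complex^'n^'m \<Rightarrow> real) \<in> borel_measurable borel"
  by (rule borel_measurable_continuous_onI[OF continuous_opnorm])

lemma borel_matrix_inv[measurable]: "(matrix_inv :: complex^'n^'n \<Rightarrow> _) \<in> borel_measurable borel"
proof -
  have "(\<lambda>M::complex^'n^'n. if M \<in> {M. invertible M} then matrix_inv M else (SOME A'. False))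
        \<in> borel_measurable borel"
    by (rule borel_measurable_continuous_on_if)
       (auto intro: borel_open open_invertible continuous_matrix_inv continuous_on_const)
  also have "(\<lambda>M::complex^'n^'n. if M \<in> {M. invertible M} then matrix_inv M else (SOME A'. False)) = matrix_inv"
    by (auto simp: fun_eq_iff matrix_inv_noninv)
  finally show ?thesis .
qed

lemma continuous_matvec: "continuous_on UNIV (\<lambda>p::(complex^'n^'m) \<times> (complex^'n). fst p *v snd p)"
  unfolding matrix_vector_mult_def by (intro continuous_intros)

lemma borel_matvec[measurable]:
  fixes f :: "'a \<Rightarrow> complex^'n^'m" and g :: "'a \<Rightarrow> complex^'n"
  assumes [measurable]: "f \<in> borel_measurable N" "g \<in> borel_measurable N"
  shows "(\<lambda>x. f x *v g x) \<in> borel_measurable N"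
  using borel_measurable_continuous_on[OF continuous_matvec, of "\<lambda>x. (f x, g x)" N] by simp

lemma pred_invertible[measurable]: "{M::complex^'n^'n. invertible M} \<in> sets borel"
  by (rule borel_open[OF open_invertible])

lemma borel_Gfun[measurable]:
  fixes f :: "'a \<Rightarrow> complex^'n^'n" and g :: "'a \<Rightarrow> complex^'n"
  assumes [measurable]: "f \<in> borel_measurable N" "g \<in> borel_measurable N"
  shows "(\<lambda>x. Gfun c (f x) (g x)) \<in> borel_measurable N"
proof -
  have s: "{x \<in> space N. invertible (f x)} \<in> sets N"
    using measurable_sets[OF assms(1) pred_invertible] by (simp add: vimage_def Int_def conj_commute)
  have "{x \<in> space N. invertible (f x) \<and> opnorm (matrix_inv (f x)) \<le> c} =
        {x \<in> space N. invertible (f x)} \<inter> {x \<in> space N. opnorm (matrix_inv (f x)) \<le> c}" by auto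
  also have "\<dots> \<in> sets N" using s by measurable
  finally have S: "{x \<in> space N. invertible (f x) \<and> opnorm (matrix_inv (f x)) \<le> c} \<in> sets N" .
  show ?thesis unfolding Gfun_def
    by (rule measurable_If[OF _ _ S]) measurable
qed

lemma iid_sum_sq:
  fixes W :: "nat \<Rightarrow> 'w \<Rightarrow> 'T::topological_space" and h :: "'T \<Rightarrow> real"
  assumes prob: "prob_space M"
    and Wm: "\<And>s. W s \<in> borel_measurable M"
    and ind: "prob_space.indep_vars M (\<lambda>_. borel) W UNIV"
    and dist: "\<And>s. distr M borel (W s) = distr M borel (W 0)"
    and hm: "h \<in> borel_measurable borel"
    and L2: "integrable M (\<lambda>\<omega>. (h (W 0 \<omega>))\<^sup>2)"
    and mean: "integral\<^sup>L M (\<lambda>\<omega>. h (W 0 \<omega>)) = 0"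
  shows "integrable M (\<lambda>\<omega>. (\<Sum>s<n. h (W s \<omega>))\<^sup>2) \<and>
         integral\<^sup>L M (\<lambda>\<omega>. (\<Sum>s<n. h (W s \<omega>))\<^sup>2) = real n * integral\<^sup>L M (\<lambda>\<omega>. (h (W 0 \<omega>))\<^sup>2)"
proof -
  interpret prob_space M by (rule prob)
  define Y where "Y s \<omega> = h (W s \<omega>)" for s \<omega>
  have Ym[measurable]: "Y s \<in> borel_measurable M" for s
    unfolding Y_def using measurable_comp[OF Wm hm] by (simp add: comp_def)
  have hm2: "(\<lambda>t. (h t)\<^sup>2) \<in> borel_measurable borel" using hm by measurable
  have L2s: "integrable M (\<lambda>\<omega>. (Y s \<omega>)\<^sup>2)" for s
  proof -
    have "integrable (distr M borel (W s)) (\<lambda>t. (h t)\<^sup>2)"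
      unfolding dist[of s] by (subst integrable_distr_eq[OF Wm hm2]) (rule L2)
    then show ?thesis unfolding Y_def by (subst (asm) integrable_distr_eq[OF Wm hm2])
  qed
  have E2s: "integral\<^sup>L M (\<lambda>\<omega>. (Y s \<omega>)\<^sup>2) = integral\<^sup>L M (\<lambda>\<omega>. (h (W 0 \<omega>))\<^sup>2)" for s
    unfolding Y_def using integral_distr[OF Wm hm2, of s] integral_distr[OF Wm hm2, of 0] dist[of s] by simp
  have Ints: "integrable M (Y s)" for s
    by (rule square_integrable_imp_integrable[OF Ym L2s])
  have Es: "integral\<^sup>L M (Y s) = 0" for s
    unfolding Y_def using integral_distr[OF Wm hm, of s] integral_distr[OF Wm hm, of 0] dist[of s] mean by simp
  have indY: "indep_vars (\<lambda>_. borel) Y UNIV"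
    unfolding Y_def by (rule indep_vars_compose2[OF ind]) (rule hm)
  have cross: "integrable M (\<lambda>\<omega>. Y s \<omega> * Y t \<omega>) \<and>
      integral\<^sup>L M (\<lambda>\<omega>. Y s \<omega> * Y t \<omega>) = (if s = t then integral\<^sup>L M (\<lambda>\<omega>. (h (W 0 \<omega>))\<^sup>2) else 0)" for s t
  proof (cases "s = t")
    case True
    then show ?thesis using L2s[of s] E2s[of s] by (simp add: power2_eq_square)
  next
    case False
    have ind2: "indep_vars (\<lambda>_. borel) Y {s, t}" by (rule indep_vars_subset[OF indY]) auto
    have "integrable M (\<lambda>\<omega>. \<Prod>i\<in>{s,t}. Y i \<omega>)"
      by (rule indep_vars_integrable[OF _ ind2]) (auto intro: Ints)
    moreover have "integral\<^sup>L M (\<lambda>\<omega>. \<Prod>i\<in>{s,t}. Y i \<omega>) = (\<Prod>i\<in>{s,t}. integral\<^sup>L M (Y i))"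
      by (rule indep_vars_lebesgue_integral[OF _ ind2]) (auto intro: Ints)
    ultimately show ?thesis using False Es by simp
  qed
  have crossI: "integrable M (\<lambda>\<omega>. Y s \<omega> * Y t \<omega>)" for s t using cross by blast
  have crossE: "integral\<^sup>L M (\<lambda>\<omega>. Y s \<omega> * Y t \<omega>) = (if s = t then integral\<^sup>L M (\<lambda>\<omega>. (h (W 0 \<omega>))\<^sup>2) else 0)" for s t
    using cross by blast
  have sq: "(\<Sum>s<n. Y s \<omega>)\<^sup>2 = (\<Sum>s<n. \<Sum>t<n. Y s \<omega> * Y t \<omega>)" for \<omega>
    by (simp add: power2_eq_square sum_product)
  have int: "integrable M (\<lambda>\<omega>. \<Sum>s<n. \<Sum>t<n. Y s \<omega> * Y t \<omega>)"
    by (rule Bochner_Integration.integrable_sum, rule Bochner_Integration.integrable_sum, rule crossI)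
  have "integral\<^sup>L M (\<lambda>\<omega>. \<Sum>s<n. \<Sum>t<n. Y s \<omega> * Y t \<omega>) =
        (\<Sum>s<n. \<Sum>t<n. integral\<^sup>L M (\<lambda>\<omega>. Y s \<omega> * Y t \<omega>))"
    by (simp add: integral_sum integrable_sum crossI)
  also have "\<dots> = (\<Sum>s<n. \<Sum>t<n. (if s = t then integral\<^sup>L M (\<lambda>\<omega>. (h (W 0 \<omega>))\<^sup>2) else 0))"
    by (simp only: crossE)
  also have "\<dots> = real n * integral\<^sup>L M (\<lambda>\<omega>. (h (W 0 \<omega>))\<^sup>2)" by simp
  finally have fin: "integral\<^sup>L M (\<lambda>\<omega>. \<Sum>s<n. \<Sum>t<n. Y s \<omega> * Y t \<omega>) = real n * integral\<^sup>L M (\<lambda>\<omega>. (h (W 0 \<omega>))\<^sup>2)" .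
  have eqf: "(\<lambda>\<omega>. (\<Sum>s<n. Y s \<omega>)\<^sup>2) = (\<lambda>\<omega>. \<Sum>s<n. \<Sum>t<n. Y s \<omega> * Y t \<omega>)"
    using sq by simp
  have "integrable M (\<lambda>\<omega>. (\<Sum>s<n. Y s \<omega>)\<^sup>2) \<and> integral\<^sup>L M (\<lambda>\<omega>. (\<Sum>s<n. Y s \<omega>)\<^sup>2) = real n * integral\<^sup>L M (\<lambda>\<omega>. (h (W 0 \<omega>))\<^sup>2)"
    unfolding eqf using int fin by simp
  then show ?thesis by (simp add: Y_def)
qed

lemma norm_sq_basis: "(norm (x::'v::euclidean_space))\<^sup>2 = (\<Sum>b\<in>Basis. (x \<bullet> b)\<^sup>2)"
  by (subst power2_norm_eq_inner, subst euclidean_inner) (simp add: power2_eq_square)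

lemma le_1_sq: "(a::real) \<le> 1 + a\<^sup>2"
proof -
  have h: "(a - 1/2)\<^sup>2 = a\<^sup>2 - a + 1/4" by (simp add: power2_eq_square algebra_simps)
  show ?thesis using zero_le_power2[of "a - 1/2"] h by linarith
qed

lemma iid_sum_norm_sq:
  fixes W :: "nat \<Rightarrow> 'w \<Rightarrow> 'T::topological_space" and Z :: "'T \<Rightarrow> 'v::euclidean_space"
  assumes prob: "prob_space M"
    and Wm: "\<And>s. W s \<in> borel_measurable M"
    and ind: "prob_space.indep_vars M (\<lambda>_. borel) W UNIV"
    and dist: "\<And>s. distr M borel (W s) = distr M borel (W 0)"
    and Zm: "Z \<in> borel_measurable borel"
    and L2: "integrable M (\<lambda>\<omega>. (norm (Z (W 0 \<omega>)))\<^sup>2)"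
    and mean: "integral\<^sup>L M (\<lambda>\<omega>. Z (W 0 \<omega>)) = 0"
  shows "integrable M (\<lambda>\<omega>. (norm (\<Sum>s<n. Z (W s \<omega>)))\<^sup>2) \<and>
         integral\<^sup>L M (\<lambda>\<omega>. (norm (\<Sum>s<n. Z (W s \<omega>)))\<^sup>2) = real n * integral\<^sup>L M (\<lambda>\<omega>. (norm (Z (W 0 \<omega>)))\<^sup>2)"
proof -
  interpret prob_space M by (rule prob)
  have ZWm[measurable]: "(\<lambda>\<omega>. Z (W s \<omega>)) \<in> borel_measurable M" for s
    using measurable_comp[OF Wm Zm] by (simp add: comp_def)
  have intZ: "integrable M (\<lambda>\<omega>. Z (W 0 \<omega>))"
  proof (rule Bochner_Integration.integrable_bound[where f="\<lambda>\<omega>. 1 + (norm (Z (W 0 \<omega>)))\<^sup>2"])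
    show "integrable M (\<lambda>\<omega>. 1 + (norm (Z (W 0 \<omega>)))\<^sup>2)" using L2 by simp
    show "AE \<omega> in M. norm (Z (W 0 \<omega>)) \<le> norm (1 + (norm (Z (W 0 \<omega>)))\<^sup>2)"
    proof (intro AE_I2)
      fix \<omega> have "norm (Z (W 0 \<omega>)) \<le> 1 + (norm (Z (W 0 \<omega>)))\<^sup>2"
        by (rule le_1_sq)
      then show "norm (Z (W 0 \<omega>)) \<le> norm (1 + (norm (Z (W 0 \<omega>)))\<^sup>2)" by simp
    qed
  qed simp
  have comp: "integrable M (\<lambda>\<omega>. (\<Sum>s<n. Z (W s \<omega>) \<bullet> b)\<^sup>2) \<and>
         integral\<^sup>L M (\<lambda>\<omega>. (\<Sum>s<n. Z (W s \<omega>) \<bullet> b)\<^sup>2) = real n * integral\<^sup>L M (\<lambda>\<omega>. (Z (W 0 \<omega>) \<bullet> b)\<^sup>2)"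
    if b: "b \<in> Basis" for b
  proof (rule iid_sum_sq[OF prob Wm ind dist, of "\<lambda>t. Z t \<bullet> b"])
    show "(\<lambda>t. Z t \<bullet> b) \<in> borel_measurable borel" using Zm by measurable
    show "integrable M (\<lambda>\<omega>. (Z (W 0 \<omega>) \<bullet> b)\<^sup>2)"
    proof (rule Bochner_Integration.integrable_bound[OF L2])
      show "(\<lambda>\<omega>. (Z (W 0 \<omega>) \<bullet> b)\<^sup>2) \<in> borel_measurable M" by measurable
      show "AE \<omega> in M. norm ((Z (W 0 \<omega>) \<bullet> b)\<^sup>2) \<le> norm ((norm (Z (W 0 \<omega>)))\<^sup>2)"
      proof (intro AE_I2)
        fix \<omega>
        have "\<bar>Z (W 0 \<omega>) \<bullet> b\<bar> \<le> norm (Z (W 0 \<omega>))" using b by (simp add: Basis_le_norm)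
        then have "(Z (W 0 \<omega>) \<bullet> b)\<^sup>2 \<le> (norm (Z (W 0 \<omega>)))\<^sup>2"
          by (metis abs_le_square_iff abs_norm_cancel)
        then show "norm ((Z (W 0 \<omega>) \<bullet> b)\<^sup>2) \<le> norm ((norm (Z (W 0 \<omega>)))\<^sup>2)" by simp
      qed
    qed
    show "integral\<^sup>L M (\<lambda>\<omega>. Z (W 0 \<omega>) \<bullet> b) = 0" using intZ mean by simp
  qed
  have eq: "(norm (\<Sum>s<n. Z (W s \<omega>)))\<^sup>2 = (\<Sum>b\<in>Basis. (\<Sum>s<n. Z (W s \<omega>) \<bullet> b)\<^sup>2)" for \<omega>
    by (simp add: norm_sq_basis inner_sum_left)
  have eq0: "(norm (Z (W 0 \<omega>)))\<^sup>2 = (\<Sum>b\<in>Basis. (Z (W 0 \<omega>) \<bullet> b)\<^sup>2)" for \<omega>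
    by (simp add: norm_sq_basis)
  have compI: "integrable M (\<lambda>\<omega>. (\<Sum>s<n. Z (W s \<omega>) \<bullet> b)\<^sup>2)" if "b \<in> Basis" for b
    using comp[OF that] by blast
  have compE: "integral\<^sup>L M (\<lambda>\<omega>. (\<Sum>s<n. Z (W s \<omega>) \<bullet> b)\<^sup>2) = real n * integral\<^sup>L M (\<lambda>\<omega>. (Z (W 0 \<omega>) \<bullet> b)\<^sup>2)"
    if "b \<in> Basis" for b
    using comp[OF that] by blast
  have compI0: "integrable M (\<lambda>\<omega>. (Z (W 0 \<omega>) \<bullet> b)\<^sup>2)" if b: "b \<in> Basis" for b
  proof (rule Bochner_Integration.integrable_bound[OF L2])
    show "(\<lambda>\<omega>. (Z (W 0 \<omega>) \<bullet> b)\<^sup>2) \<in> borel_measurable M" by measurable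
    show "AE \<omega> in M. norm ((Z (W 0 \<omega>) \<bullet> b)\<^sup>2) \<le> norm ((norm (Z (W 0 \<omega>)))\<^sup>2)"
    proof (intro AE_I2)
      fix \<omega>
      have "\<bar>Z (W 0 \<omega>) \<bullet> b\<bar> \<le> norm (Z (W 0 \<omega>))" using b by (simp add: Basis_le_norm)
      then have "(Z (W 0 \<omega>) \<bullet> b)\<^sup>2 \<le> (norm (Z (W 0 \<omega>)))\<^sup>2"
        by (metis abs_le_square_iff abs_norm_cancel)
      then show "norm ((Z (W 0 \<omega>) \<bullet> b)\<^sup>2) \<le> norm ((norm (Z (W 0 \<omega>)))\<^sup>2)" by simp
    qed
  qed
  have I: "integrable M (\<lambda>\<omega>. \<Sum>b\<in>Basis. (\<Sum>s<n. Z (W s \<omega>) \<bullet> b)\<^sup>2)"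
    by (rule Bochner_Integration.integrable_sum, rule compI)
  have "integral\<^sup>L M (\<lambda>\<omega>. \<Sum>b\<in>Basis. (\<Sum>s<n. Z (W s \<omega>) \<bullet> b)\<^sup>2)
      = (\<Sum>b\<in>Basis. integral\<^sup>L M (\<lambda>\<omega>. (\<Sum>s<n. Z (W s \<omega>) \<bullet> b)\<^sup>2))"
    by (rule Bochner_Integration.integral_sum, rule compI)
  also have "\<dots> = (\<Sum>b\<in>Basis. real n * integral\<^sup>L M (\<lambda>\<omega>. (Z (W 0 \<omega>) \<bullet> b)\<^sup>2))"
    by (rule sum.cong[OF refl], rule compE)
  also have "\<dots> = real n * (\<Sum>b\<in>Basis. integral\<^sup>L M (\<lambda>\<omega>. (Z (W 0 \<omega>) \<bullet> b)\<^sup>2))"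
    by (simp add: sum_distrib_left)
  also have "(\<Sum>b\<in>Basis. integral\<^sup>L M (\<lambda>\<omega>. (Z (W 0 \<omega>) \<bullet> b)\<^sup>2)) = integral\<^sup>L M (\<lambda>\<omega>. \<Sum>b\<in>Basis. (Z (W 0 \<omega>) \<bullet> b)\<^sup>2)"
    by (rule Bochner_Integration.integral_sum[symmetric], rule compI0)
  finally have fin: "integral\<^sup>L M (\<lambda>\<omega>. \<Sum>b\<in>Basis. (\<Sum>s<n. Z (W s \<omega>) \<bullet> b)\<^sup>2) = real n * integral\<^sup>L M (\<lambda>\<omega>. \<Sum>b\<in>Basis. (Z (W 0 \<omega>) \<bullet> b)\<^sup>2)" .
  show ?thesis unfolding eq eq0 using I fin by simp
qed

lemma entry_bound_norm:
  assumes "\<And>i j. norm ((M::'a::real_normed_vector^'n^'m)$i$j) \<le> B"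
  shows "norm M \<le> real CARD('m) * real CARD('n) * B"
proof -
  have "norm M \<le> (\<Sum>i\<in>UNIV. norm (M$i))" by (rule norm_le_sum_cart)
  also have "\<dots> \<le> (\<Sum>i::'m\<in>UNIV. real CARD('n) * B)"
  proof (rule sum_mono)
    fix i
    have "norm (M$i) \<le> (\<Sum>j\<in>UNIV. norm (M$i$j))" by (rule norm_le_sum_cart)
    also have "\<dots> \<le> (\<Sum>j::'n\<in>UNIV. B)" by (rule sum_mono) (rule assms)
    finally show "norm (M$i) \<le> real CARD('n) * B" by simp
  qed
  finally show ?thesis by simp
qed

lemma norm_entry_le: "norm ((M::'a::real_normed_vector^'n^'m)$i$j) \<le> norm M"
  by (meson Finite_Cartesian_Product.norm_nth_le order_trans)

lemma norm_cadj_le: "norm (cadj (M::complex^'n^'m)) \<le> real CARD('n) * real CARD('m) * norm M"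
  by (rule entry_bound_norm) (simp add: cadj_def norm_entry_le)

lemma norm_matmul_le:
  "norm ((M::complex^'n^'m) ** (N::complex^'k^'n)) \<le> real CARD('m) * real CARD('k) * (real CARD('n) * norm M * norm N)"
proof (rule entry_bound_norm)
  fix i j
  have "norm ((M ** N)$i$j) = norm (\<Sum>l\<in>UNIV. M$i$l * N$l$j)" by (simp add: matrix_matrix_mult_def)
  also have "\<dots> \<le> (\<Sum>l\<in>UNIV. norm (M$i$l * N$l$j))" by (rule norm_sum)
  also have "\<dots> \<le> (\<Sum>l::'n\<in>UNIV. norm M * norm N)"
    by (rule sum_mono) (simp add: norm_mult mult_mono norm_entry_le)
  finally show "norm ((M ** N)$i$j) \<le> real CARD('n) * norm M * norm N" by simp
qed

lemma norm_matvec_le: "norm ((M::complex^'n^'m) *v v) \<le> real CARD('m) * real CARD('n) * norm M * norm v"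
  by (rule order_trans[OF opnorm_mv]) (simp add: mult_right_mono opnorm_le_norm)

lemma continuous_cadj: "continuous_on UNIV (cadj :: complex^'n^'m \<Rightarrow> _)"
  unfolding cadj_def by (intro continuous_intros)

lemma borel_cadj[measurable]:
  assumes [measurable]: "f \<in> borel_measurable N"
  shows "(\<lambda>x. cadj (f x :: complex^'n^'m)) \<in> borel_measurable N"
  using borel_measurable_continuous_on[OF continuous_cadj assms] .

lemma continuous_matmul: "continuous_on UNIV (\<lambda>p::(complex^'n^'m) \<times> (complex^'k^'n). fst p ** snd p)"
  unfolding matrix_matrix_mult_def by (intro continuous_intros)

lemma borel_matmul[measurable]:
  fixes f :: "'a \<Rightarrow> complex^'n^'m" and g :: "'a \<Rightarrow> complex^'k^'n"
  assumes [measurable]: "f \<in> borel_measurable N" "g \<in> borel_measurable N"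
  shows "(\<lambda>x. f x ** g x) \<in> borel_measurable N"
  using borel_measurable_continuous_on[OF continuous_matmul, of "\<lambda>x. (f x, g x)" N] by simp

lemma mv_scaleR: "(r *\<^sub>R (M::complex^'n^'m)) *v v = r *\<^sub>R (M *v v)"
  by (simp add: matrix_vector_mult_def vec_eq_iff scaleR_sum_right mult_scaleR_left)

lemma mv_sum: "(\<Sum>s\<in>S. M s) *v (v::complex^'n) = (\<Sum>s\<in>S. M s *v v)"
  by (induct S rule: infinite_finite_induct) (simp_all add: matrix_vector_mult_add_rdistrib)

lemma indep_var_from_prod:
  fixes X :: "'a \<Rightarrow> 'b::topological_space" and Y :: "'a \<Rightarrow> 'b"
  assumes prob: "prob_space M"
    and Xm: "X \<in> borel_measurable M" and Ym: "Y \<in> borel_measurable M"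
    and eq: "\<And>A B. A \<in> sets borel \<Longrightarrow> B \<in> sets borel \<Longrightarrow>
       measure M (X -` A \<inter> space M \<inter> (Y -` B \<inter> space M)) = measure M (X -` A \<inter> space M) * measure M (Y -` B \<inter> space M)"
  shows "prob_space.indep_var M borel X borel Y"
proof -
  interpret prob_space M by (rule prob)
  have Int_stable: "Int_stable {Z -` A \<inter> space M |A. A \<in> sets (borel :: 'b measure)}" for Z :: "'a \<Rightarrow> 'b"
  proof (safe intro!: Int_stableI)
    fix A B :: "'b set" assume "A \<in> sets borel" "B \<in> sets borel"
    then show "\<exists>C. (Z -` A \<inter> space M) \<inter> (Z -` B \<inter> space M) = (Z -` C \<inter> space M) \<and> C \<in> sets borel"
      by (intro exI[of _ "A \<inter> B"]) auto
  qed
  show ?thesis unfolding indep_var_eq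
  proof (intro conjI indep_set_sigma_sets Int_stable Xm Ym)
    show "indep_set {X -` A \<inter> space M |A. A \<in> sets borel} {Y -` A \<inter> space M |A. A \<in> sets borel}"
    proof (safe intro!: indep_setI)
      fix A :: "'b set" assume "A \<in> sets borel" then show "X -` A \<inter> space M \<in> sets M"
        using Xm by (auto intro: measurable_sets)
    next
      fix A :: "'b set" assume "A \<in> sets borel" then show "Y -` A \<inter> space M \<in> sets M"
        using Ym by (auto intro: measurable_sets)
    next
      fix A B :: "'b set" assume "A \<in> sets borel" "B \<in> sets borel"
      then show "prob ((X -` A \<inter> space M) \<inter> (Y -` B \<inter> space M)) = prob (X -` A \<inter> space M) * prob (Y -` B \<inter> space M)"
        by (rule eq)
    qed
  qed
qed

lemma indep_comp2:
  fixes U :: "'w \<Rightarrow> 'a::topological_space" and V :: "'w \<Rightarrow> 'b::topological_space"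
    and f :: "'a \<Rightarrow> complex" and g :: "'b \<Rightarrow> complex"
  assumes prob: "prob_space M" and Um: "U \<in> borel_measurable M" and Vm: "V \<in> borel_measurable M"
    and fm: "f \<in> borel_measurable borel" and gm: "g \<in> borel_measurable borel"
    and eq: "\<And>A B. A \<in> sets borel \<Longrightarrow> B \<in> sets borel \<Longrightarrow>
      measure M {\<omega> \<in> space M. U \<omega> \<in> A \<and> V \<omega> \<in> B} = measure M {\<omega> \<in> space M. U \<omega> \<in> A} * measure M {\<omega> \<in> space M. V \<omega> \<in> B}"
  shows "prob_space.indep_var M borel (\<lambda>\<omega>. f (U \<omega>)) borel (\<lambda>\<omega>. g (V \<omega>))"
proof (rule indep_var_from_prod[OF prob])
  show "(\<lambda>\<omega>. f (U \<omega>)) \<in> borel_measurable M" using measurable_comp[OF Um fm] by (simp add: comp_def)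
  show "(\<lambda>\<omega>. g (V \<omega>)) \<in> borel_measurable M" using measurable_comp[OF Vm gm] by (simp add: comp_def)
  fix A B :: "complex set" assume A: "A \<in> sets borel" and B: "B \<in> sets borel"
  have fA: "f -` A \<in> sets borel" using measurable_sets[OF fm A] by simp
  have gB: "g -` B \<in> sets borel" using measurable_sets[OF gm B] by simp
  have e1: "{\<omega> \<in> space M. U \<omega> \<in> f -` A} \<inter> {\<omega> \<in> space M. V \<omega> \<in> g -` B}
        = {\<omega> \<in> space M. U \<omega> \<in> f -` A \<and> V \<omega> \<in> g -` B}" by auto
  have e2: "(\<lambda>\<omega>. f (U \<omega>)) -` A \<inter> space M = {\<omega> \<in> space M. U \<omega> \<in> f -` A}" by auto
  have e3: "(\<lambda>\<omega>. g (V \<omega>)) -` B \<inter> space M = {\<omega> \<in> space M. V \<omega> \<in> g -` B}" by auto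
  show "measure M ((\<lambda>\<omega>. f (U \<omega>)) -` A \<inter> space M \<inter> ((\<lambda>\<omega>. g (V \<omega>)) -` B \<inter> space M)) =
    measure M ((\<lambda>\<omega>. f (U \<omega>)) -` A \<inter> space M) * measure M ((\<lambda>\<omega>. g (V \<omega>)) -` B \<inter> space M)"
    unfolding e2 e3 e1 by (rule eq[OF fA gB])
qed

lemma indep_mean_zero:
  fixes U :: "'w \<Rightarrow> 'a::topological_space" and V :: "'w \<Rightarrow> 'b::topological_space"
    and f :: "'a \<Rightarrow> complex" and g :: "'b \<Rightarrow> complex"
  assumes prob: "prob_space M" and Um: "U \<in> borel_measurable M" and Vm: "V \<in> borel_measurable M"
    and fm: "f \<in> borel_measurable borel" and gm: "g \<in> borel_measurable borel"
    and eq: "\<And>A B. A \<in> sets borel \<Longrightarrow> B \<in> sets borel \<Longrightarrow>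
      measure M {\<omega> \<in> space M. U \<omega> \<in> A \<and> V \<omega> \<in> B} = measure M {\<omega> \<in> space M. U \<omega> \<in> A} * measure M {\<omega> \<in> space M. V \<omega> \<in> B}"
    and fi: "integrable M (\<lambda>\<omega>. f (U \<omega>))" and gi: "integrable M (\<lambda>\<omega>. g (V \<omega>))"
    and g0: "integral\<^sup>L M (\<lambda>\<omega>. g (V \<omega>)) = 0"
  shows "integrable M (\<lambda>\<omega>. f (U \<omega>) * g (V \<omega>)) \<and> integral\<^sup>L M (\<lambda>\<omega>. f (U \<omega>) * g (V \<omega>)) = 0"
proof -
  interpret prob_space M by (rule prob)
  have I: "indep_var borel (\<lambda>\<omega>. f (U \<omega>)) borel (\<lambda>\<omega>. g (V \<omega>))"
    by (rule indep_comp2[OF prob Um Vm fm gm eq])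
  have i1: "integrable M (\<lambda>\<omega>. f (U \<omega>) * g (V \<omega>))"
    by (rule indep_var_integrable[OF I fi gi])
  have i2: "integral\<^sup>L M (\<lambda>\<omega>. f (U \<omega>) * g (V \<omega>)) = integral\<^sup>L M (\<lambda>\<omega>. f (U \<omega>)) * integral\<^sup>L M (\<lambda>\<omega>. g (V \<omega>))"
    by (rule indep_var_lebesgue_integral[OF I fi gi])
  show ?thesis using i1 i2 g0 by simp
qed

lemma borel_vec_nth[measurable (raw)]:
  assumes [measurable]: "f \<in> borel_measurable N"
  shows "(\<lambda>x. (f x :: 'a::real_normed_vector^'n) $ i) \<in> borel_measurable N"
  using borel_measurable_continuous_on[OF continuous_on_component[OF continuous_on_id] assms] by simp

lemma ZB_bound:
  fixes P :: "complex^'p^'q" and v :: "complex^'p" and e :: "complex^'q"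
  assumes "norm P \<le> B"
  defines "K \<equiv> real CARD('p) * real CARD('q)"
  shows "norm (cadj P *v (P *v v + e)) \<le> K*K*B*(K*B + 1) * (norm v + norm e)"
proof -
  have B0: "0 \<le> B" using assms(1) norm_ge_zero order_trans by blast
  have K0: "0 \<le> K" by (simp add: K_def)
  have n1: "norm (P *v v) \<le> K * B * norm v"
  proof -
    have "norm (P *v v) \<le> real CARD('q) * real CARD('p) * norm P * norm v" by (rule norm_matvec_le)
    also have "\<dots> = K * (norm P * norm v)" by (simp add: K_def mult_ac)
    also have "\<dots> \<le> K * (B * norm v)" using K0 assms(1) by (intro mult_left_mono mult_right_mono) auto
    finally show ?thesis by (simp add: mult_ac)
  qed
  have n2: "norm (cadj P) \<le> K * B"
    using norm_cadj_le[of P] assms(1) by (simp add: K_def mult_left_mono order_trans)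
  have "norm (cadj P *v (P *v v + e)) \<le> K * norm (cadj P) * norm (P *v v + e)"
    using norm_matvec_le[of "cadj P" "P *v v + e"] by (simp add: K_def)
  also have "\<dots> \<le> K * (K * B) * (K * B * norm v + norm e)"
  proof (intro mult_mono mult_left_mono n2 K0)
    show "norm (P *v v + e) \<le> K * B * norm v + norm e"
      using norm_triangle_ineq[of "P *v v" e] n1 by linarith
  qed (use K0 B0 in auto)
  also have "\<dots> \<le> K*K*B*(K*B + 1) * (norm v + norm e)"
  proof -
    have "K * B * norm v + norm e \<le> (K*B + 1) * (norm v + norm e)"
      using K0 B0 by (simp add: algebra_simps)
    then have "K * (K * B) * (K * B * norm v + norm e) \<le> K * (K * B) * ((K*B + 1) * (norm v + norm e))"
      using K0 B0 by (intro mult_left_mono) auto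
    then show ?thesis by (simp add: mult.assoc)
  qed
  finally show ?thesis .
qed

lemma ZB_component:
  fixes P :: "complex^'p^'q" and x mu :: "complex^'p" and e :: "complex^'q"
  shows "(cadj P *v (P *v (x - mu) + e)) $ i =
    (\<Sum>j\<in>UNIV. (\<Sum>k\<in>UNIV. (cnj (P$j$i) * P$j$k) * (x$k - mu$k)) + cnj (P$j$i) * e$j)"
  by (simp add: cadj_def matrix_vector_mult_def sum_distrib_left distrib_left mult.assoc)

lemma mean_ZB:
  fixes X :: "'w \<Rightarrow> complex^'p" and P :: "'w \<Rightarrow> complex^'p^'q" and E :: "'w \<Rightarrow> complex^'q"
  assumes prob: "prob_space M"
    and Xm[measurable]: "X \<in> borel_measurable M" and Pm[measurable]: "P \<in> borel_measurable M"
    and Em[measurable]: "E \<in> borel_measurable M"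
    and indPX: "\<And>A B. A \<in> sets borel \<Longrightarrow> B \<in> sets borel \<Longrightarrow>
      measure M {\<omega> \<in> space M. P \<omega> \<in> A \<and> X \<omega> \<in> B} = measure M {\<omega> \<in> space M. P \<omega> \<in> A} * measure M {\<omega> \<in> space M. X \<omega> \<in> B}"
    and indPE: "\<And>A B. A \<in> sets borel \<Longrightarrow> B \<in> sets borel \<Longrightarrow>
      measure M {\<omega> \<in> space M. P \<omega> \<in> A \<and> E \<omega> \<in> B} = measure M {\<omega> \<in> space M. P \<omega> \<in> A} * measure M {\<omega> \<in> space M. E \<omega> \<in> B}"
    and Xi: "integrable M X" and Xmean: "integral\<^sup>L M X = mu"
    and Ei: "integrable M E" and Emean: "integral\<^sup>L M E = 0"
    and Pb: "AE \<omega> in M. norm (P \<omega>) \<le> B"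
  shows "integrable M (\<lambda>\<omega>. cadj (P \<omega>) *v (P \<omega> *v (X \<omega> - mu) + E \<omega>)) \<and>
         integral\<^sup>L M (\<lambda>\<omega>. cadj (P \<omega>) *v (P \<omega> *v (X \<omega> - mu) + E \<omega>)) = 0"
proof -
  interpret prob_space M by (rule prob)
  define K where "K = real CARD('p) * real CARD('q)"
  define F where "F \<omega> = cadj (P \<omega>) *v (P \<omega> *v (X \<omega> - mu) + E \<omega>)" for \<omega>
  have Fm[measurable]: "F \<in> borel_measurable M" unfolding F_def by measurable
  have Fint: "integrable M F"
  proof (rule Bochner_Integration.integrable_bound[where f="\<lambda>\<omega>. K*K*B*(K*B + 1) * (norm (X \<omega> - mu) + norm (E \<omega>))"])
    show "integrable M (\<lambda>\<omega>. K*K*B*(K*B + 1) * (norm (X \<omega> - mu) + norm (E \<omega>)))"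
      using Xi Ei by (intro integrable_mult_right Bochner_Integration.integrable_add integrable_norm
                        Bochner_Integration.integrable_diff) auto
    show "AE \<omega> in M. norm (F \<omega>) \<le> norm (K*K*B*(K*B + 1) * (norm (X \<omega> - mu) + norm (E \<omega>)))"
      using Pb
    proof eventually_elim
      case (elim \<omega>)
      then show ?case unfolding F_def K_def using ZB_bound[OF elim, of "X \<omega> - mu" "E \<omega>"]
        by (smt (verit) real_norm_def)
    qed
  qed (rule Fm)
  have Pent: "AE \<omega> in M. norm (P \<omega> $ j $ i) \<le> B" for i j
    using Pb by eventually_elim (meson norm_entry_le order_trans)
  have comp0: "integral\<^sup>L M (\<lambda>\<omega>. F \<omega> $ i) = 0" for i
  proof -
    have t1: "integrable M (\<lambda>\<omega>. (cnj (P \<omega> $j$i) * P \<omega> $j$k) * (X \<omega> $k - mu$k)) \<and>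
              integral\<^sup>L M (\<lambda>\<omega>. (cnj (P \<omega> $j$i) * P \<omega> $j$k) * (X \<omega> $k - mu$k)) = 0" for j k
    proof (rule indep_mean_zero[OF prob Pm Xm, where f="\<lambda>Q. cnj (Q$j$i) * Q$j$k" and g="\<lambda>x. x$k - mu$k"])
      show "(\<lambda>Q::complex^'p^'q. cnj (Q$j$i) * Q$j$k) \<in> borel_measurable borel"
        by (intro borel_measurable_continuous_onI continuous_intros)
      show "(\<lambda>x::complex^'p. x$k - mu$k) \<in> borel_measurable borel"
        by (intro borel_measurable_continuous_onI continuous_intros)
      show "integrable M (\<lambda>\<omega>. cnj (P \<omega> $j$i) * P \<omega> $j$k)"
      proof (rule integrable_const_bound[where B="B*B"])
        show "AE \<omega> in M. norm (cnj (P \<omega> $j$i) * P \<omega> $j$k) \<le> B*B"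
          using Pent[of j i] Pent[of j k]
          by eventually_elim (simp add: norm_mult mult_mono' order_trans[OF norm_ge_zero])
        have "(\<lambda>Q::complex^'p^'q. cnj (Q$j$i) * Q$j$k) \<in> borel_measurable borel"
          by (intro borel_measurable_continuous_onI continuous_intros)
        from measurable_comp[OF Pm this]
        show "(\<lambda>\<omega>. cnj (P \<omega> $j$i) * P \<omega> $j$k) \<in> borel_measurable M" by (simp add: comp_def)
      qed
      show "integrable M (\<lambda>\<omega>. X \<omega> $ k - mu $ k)"
        using integrable_bounded_linear[OF bounded_linear_vec_nth Xi, of k] by simp
      have "integral\<^sup>L M (\<lambda>\<omega>. X \<omega> $ k) = mu $ k"
        using integral_bounded_linear[OF bounded_linear_vec_nth Xi, of k] Xmean by simp
      then show "integral\<^sup>L M (\<lambda>\<omega>. X \<omega> $ k - mu $ k) = 0"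
        using integrable_bounded_linear[OF bounded_linear_vec_nth Xi, of k] by (simp add: prob_space)
    qed (rule indPX)
    have t2: "integrable M (\<lambda>\<omega>. cnj (P \<omega> $j$i) * E \<omega> $j) \<and>
              integral\<^sup>L M (\<lambda>\<omega>. cnj (P \<omega> $j$i) * E \<omega> $j) = 0" for j
    proof (rule indep_mean_zero[OF prob Pm Em, where f="\<lambda>Q. cnj (Q$j$i)" and g="\<lambda>x. x$j"])
      show "(\<lambda>Q::complex^'p^'q. cnj (Q$j$i)) \<in> borel_measurable borel"
        by (intro borel_measurable_continuous_onI continuous_intros)
      show "(\<lambda>x::complex^'q. x$j) \<in> borel_measurable borel"
        by (intro borel_measurable_continuous_onI continuous_intros)
      show "integrable M (\<lambda>\<omega>. cnj (P \<omega> $j$i))"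
      proof (rule integrable_const_bound[where B="B"])
        show "AE \<omega> in M. norm (cnj (P \<omega> $j$i)) \<le> B"
          using Pent[of j i] by eventually_elim simp
        have "(\<lambda>Q::complex^'p^'q. cnj (Q$j$i)) \<in> borel_measurable borel"
          by (intro borel_measurable_continuous_onI continuous_intros)
        from measurable_comp[OF Pm this]
        show "(\<lambda>\<omega>. cnj (P \<omega> $j$i)) \<in> borel_measurable M" by (simp add: comp_def)
      qed
      show "integrable M (\<lambda>\<omega>. E \<omega> $ j)"
        using integrable_bounded_linear[OF bounded_linear_vec_nth Ei, of j] by simp
      show "integral\<^sup>L M (\<lambda>\<omega>. E \<omega> $ j) = 0"
        using integral_bounded_linear[OF bounded_linear_vec_nth Ei, of j] Emean by simp
    qed (rule indPE)
    have t1I: "integrable M (\<lambda>\<omega>. (cnj (P \<omega> $j$i) * P \<omega> $j$k) * (X \<omega> $k - mu$k))" for j k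
      using t1 by blast
    have t1E: "integral\<^sup>L M (\<lambda>\<omega>. (cnj (P \<omega> $j$i) * P \<omega> $j$k) * (X \<omega> $k - mu$k)) = 0" for j k
      using t1 by blast
    have t2I: "integrable M (\<lambda>\<omega>. cnj (P \<omega> $j$i) * E \<omega> $j)" for j using t2 by blast
    have t2E: "integral\<^sup>L M (\<lambda>\<omega>. cnj (P \<omega> $j$i) * E \<omega> $j) = 0" for j using t2 by blast
    have tI: "integrable M (\<lambda>\<omega>. (\<Sum>k\<in>UNIV. (cnj (P \<omega> $j$i) * P \<omega> $j$k) * (X \<omega> $k - mu$k)))" for j
      by (rule Bochner_Integration.integrable_sum, rule t1I)
    have "integral\<^sup>L M (\<lambda>\<omega>. F \<omega> $ i) = integral\<^sup>L M (\<lambda>\<omega>.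
      (\<Sum>j\<in>UNIV. (\<Sum>k\<in>UNIV. (cnj (P \<omega> $j$i) * P \<omega> $j$k) * (X \<omega> $k - mu$k)) + cnj (P \<omega> $j$i) * E \<omega> $j))"
      unfolding F_def ZB_component ..
    also have "\<dots> = (\<Sum>j\<in>UNIV. integral\<^sup>L M (\<lambda>\<omega>. (\<Sum>k\<in>UNIV. (cnj (P \<omega> $j$i) * P \<omega> $j$k) * (X \<omega> $k - mu$k)) + cnj (P \<omega> $j$i) * E \<omega> $j))"
      by (rule Bochner_Integration.integral_sum, rule Bochner_Integration.integrable_add, rule tI, rule t2I)
    also have "\<dots> = (\<Sum>j\<in>UNIV. (\<Sum>k\<in>UNIV. integral\<^sup>L M (\<lambda>\<omega>. (cnj (P \<omega> $j$i) * P \<omega> $j$k) * (X \<omega> $k - mu$k))) + integral\<^sup>L M (\<lambda>\<omega>. cnj (P \<omega> $j$i) * E \<omega> $j))"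
    proof (rule sum.cong[OF refl])
      fix j
      show "integral\<^sup>L M (\<lambda>\<omega>. (\<Sum>k\<in>UNIV. (cnj (P \<omega> $j$i) * P \<omega> $j$k) * (X \<omega> $k - mu$k)) + cnj (P \<omega> $j$i) * E \<omega> $j)
        = (\<Sum>k\<in>UNIV. integral\<^sup>L M (\<lambda>\<omega>. (cnj (P \<omega> $j$i) * P \<omega> $j$k) * (X \<omega> $k - mu$k))) + integral\<^sup>L M (\<lambda>\<omega>. cnj (P \<omega> $j$i) * E \<omega> $j)"
        by (subst Bochner_Integration.integral_add[OF tI t2I], subst Bochner_Integration.integral_sum, rule t1I, rule refl)
    qed
    also have "\<dots> = 0" by (simp only: t1E t2E sum.neutral_const add_0_right)
    finally show ?thesis .
  qed
  have "integral\<^sup>L M F = 0"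
  proof (rule vec_eq_iff[THEN iffD2], rule allI)
    fix i
    have "integral\<^sup>L M F $ i = integral\<^sup>L M (\<lambda>\<omega>. F \<omega> $ i)"
      using integral_bounded_linear[OF bounded_linear_vec_nth Fint, of i] by simp
    then show "integral\<^sup>L M F $ i = 0 $ i" using comp0[of i] by simp
  qed
  then show ?thesis using Fint unfolding F_def by simp
qed

lemma An_diff:
  assumes "n > 0"
  shows "A_n Ps n \<omega> - A0 = (1 / real n) *\<^sub>R (\<Sum>s<n. cadj (Ps s \<omega>) ** Ps s \<omega> - A0)"
proof -
  have e: "(\<Sum>s<n. cadj (Ps s \<omega>) ** Ps s \<omega> - A0) = (\<Sum>s<n. cadj (Ps s \<omega>) ** Ps s \<omega>) - (\<Sum>s<n. A0)"
    by (rule sum_subtractf)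
  have e2: "(\<Sum>s<n. A0) = real n *\<^sub>R A0" by (simp only: sum_constant_scaleR card_lessThan)
  have e3: "(1 / real n) *\<^sub>R (real n *\<^sub>R A0) = A0"
  proof -
    have "(1 / real n) * real n = 1" using assms by simp
    then show ?thesis by (simp only: scaleR_scaleR scaleR_one)
  qed
  show ?thesis unfolding e e2 scaleR_diff_right e3 A_n_def ..
qed

lemma bn_diff:
  assumes "n > 0"
  shows "b_n Ps (\<lambda>s \<omega>. Ps s \<omega> *v Xs s \<omega> + Es s \<omega>) n \<omega> - A_n Ps n \<omega> *v mu
       = (1 / real n) *\<^sub>R (\<Sum>s<n. cadj (Ps s \<omega>) *v (Ps s \<omega> *v (Xs s \<omega> - mu) + Es s \<omega>))"
proof -
  have t: "cadj (Ps s \<omega>) *v (Ps s \<omega> *v (Xs s \<omega> - mu) + Es s \<omega>)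
        = cadj (Ps s \<omega>) *v (Ps s \<omega> *v Xs s \<omega> + Es s \<omega>) - (cadj (Ps s \<omega>) ** Ps s \<omega>) *v mu" for s
    by (simp add: matrix_vector_mult_diff_distrib matrix_vector_right_distrib matrix_vector_mul_assoc)
  have "A_n Ps n \<omega> *v mu = (1 / real n) *\<^sub>R (\<Sum>s<n. (cadj (Ps s \<omega>) ** Ps s \<omega>) *v mu)"
    by (simp add: A_n_def mv_scaleR mv_sum)
  then show ?thesis
    by (simp add: b_n_def t sum_subtractf scaleR_diff_right)
qed

lemma amgm_sqrt:
  assumes "(n::real) > 0" "0 \<le> x"
  shows "2 * x / n \<le> 1 / sqrt n + x\<^sup>2 / (n * sqrt n)"
proof -
  define r where "r = sqrt n"
  have r0: "r > 0" using assms by (simp add: r_def)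
  have "2 * x / r\<^sup>2 \<le> 1 / r + x\<^sup>2 / (r\<^sup>2 * r)"
  proof -
    have "0 \<le> (r - x)\<^sup>2" by simp
    then have "2 * x * r \<le> r\<^sup>2 + x\<^sup>2" by (simp add: power2_eq_square algebra_simps)
    then have "2 * x * r / (r\<^sup>2 * r) \<le> (r\<^sup>2 + x\<^sup>2) / (r\<^sup>2 * r)"
      using r0 by (intro divide_right_mono) auto
    moreover have "2 * x * r / (r\<^sup>2 * r) = 2 * x / r\<^sup>2" using r0 by (simp add: power2_eq_square)
    moreover have "(r\<^sup>2 + x\<^sup>2) / (r\<^sup>2 * r) = 1 / r + x\<^sup>2 / (r\<^sup>2 * r)"
      using r0 by (simp add: add_divide_distrib power2_eq_square)
    ultimately show ?thesis by simp
  qed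
  then show ?thesis using assms by (simp add: r_def)
qed

lemma lim_inv_sqrt: "(\<lambda>n. 1 / sqrt (real n)) \<longlonglongrightarrow> 0"
proof -
  have "(\<lambda>n. sqrt (1 / real n)) \<longlonglongrightarrow> sqrt 0"
    by (intro tendsto_real_sqrt lim_const_over_n)
  then show ?thesis by (simp add: real_sqrt_divide)
qed

theorem proposition2p1:
  fixes M :: "'w measure"
    and Xs :: "nat \<Rightarrow> 'w \<Rightarrow> complex^'p"
    and Ps :: "nat \<Rightarrow> 'w \<Rightarrow> complex^'p^'q"
    and Es :: "nat \<Rightarrow> 'w \<Rightarrow> complex^'q"
    and \<mu>0 :: "complex^'p" and \<sigma>2 :: real and BP :: real
  assumes prob: "prob_space M"
    and meas: "\<And>s. Xs s \<in> borel_measurable M" "\<And>s. Ps s \<in> borel_measurable M"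
              "\<And>s. Es s \<in> borel_measurable M"
    \<comment> \<open>the copies (X_s,P_s,E_s) are i.i.d.\<close>
    and iid_indep: "prob_space.indep_vars M (\<lambda>_. borel) (\<lambda>s \<omega>. (Xs s \<omega>, Ps s \<omega>, Es s \<omega>)) UNIV"
    and iid_dist: "\<And>s. distr M borel (\<lambda>\<omega>. (Xs s \<omega>, Ps s \<omega>, Es s \<omega>))
                       = distr M borel (\<lambda>\<omega>. (Xs 0 \<omega>, Ps 0 \<omega>, Es 0 \<omega>))"
    \<comment> \<open>X, P, E mutually independent\<close>
    and indep_XPE: "\<And>A B C. A \<in> sets borel \<Longrightarrow> B \<in> sets borel \<Longrightarrow> C \<in> sets borel \<Longrightarrow>
        measure M {\<omega> \<in> space M. Xs 0 \<omega> \<in> A \<and> Ps 0 \<omega> \<in> B \<and> Es 0 \<omega> \<in> C}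
        = measure M {\<omega> \<in> space M. Xs 0 \<omega> \<in> A} * measure M {\<omega> \<in> space M. Ps 0 \<omega> \<in> B}
          * measure M {\<omega> \<in> space M. Es 0 \<omega> \<in> C}"
    \<comment> \<open>moments of X: mean mu0 and <X>_2 finite (so covariance Sigma0 exists)\<close>
    and X_int: "integrable M (Xs 0)" and X_mean: "integral\<^sup>L M (Xs 0) = \<mu>0"
    and X_L2: "integrable M (\<lambda>\<omega>. (norm (Xs 0 \<omega> - \<mu>0))\<^sup>2)"
    \<comment> \<open>noise: mean 0, covariance sigma^2 I, <E>_2 finite\<close>
    and E_int: "integrable M (Es 0)" and E_mean: "integral\<^sup>L M (Es 0) = 0"
    and E_L2: "integrable M (\<lambda>\<omega>. (norm (Es 0 \<omega>))\<^sup>2)"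
    and E_cov: "\<And>i j. integral\<^sup>L M (\<lambda>\<omega>. Es 0 \<omega> $ i * cnj (Es 0 \<omega> $ j))
                      = (if i = j then complex_of_real \<sigma>2 else 0)"
    \<comment> \<open>A = E[P^H P] invertible, and ||P|| <= B_P a.s.\<close>
    and A_inv: "invertible (integral\<^sup>L M (\<lambda>\<omega>. cadj (Ps 0 \<omega>) ** Ps 0 \<omega>))"
    and P_bdd: "AE \<omega> in M. opnorm (Ps 0 \<omega>) \<le> BP"
  shows "(\<forall>n. integrable M (\<lambda>\<omega>. norm (mu_n (integral\<^sup>L M (\<lambda>\<omega>. cadj (Ps 0 \<omega>) ** Ps 0 \<omega>)) Ps
                 (\<lambda>s \<omega>. Ps s \<omega> *v Xs s \<omega> + Es s \<omega>) n \<omega> - \<mu>0)))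
       \<and> (\<lambda>n. integral\<^sup>L M (\<lambda>\<omega>. norm (mu_n (integral\<^sup>L M (\<lambda>\<omega>. cadj (Ps 0 \<omega>) ** Ps 0 \<omega>)) Ps
                 (\<lambda>s \<omega>. Ps s \<omega> *v Xs s \<omega> + Es s \<omega>) n \<omega> - \<mu>0)))
           \<in> O(\<lambda>n. 1 / sqrt (real n))
       \<and> (\<forall>\<epsilon>>0. (\<lambda>n. measure M {\<omega> \<in> space M. norm (mu_n (integral\<^sup>L M (\<lambda>\<omega>. cadj (Ps 0 \<omega>) ** Ps 0 \<omega>)) Ps
                 (\<lambda>s \<omega>. Ps s \<omega> *v Xs s \<omega> + Es s \<omega>) n \<omega> - \<mu>0) > \<epsilon>}) \<longlonglongrightarrow> 0)"
proof -
  interpret prob_space M by (rule prob)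
  define A0 where "A0 = integral\<^sup>L M (\<lambda>\<omega>. cadj (Ps 0 \<omega>) ** Ps 0 \<omega>)"
  define Is where "Is = (\<lambda>s \<omega>. Ps s \<omega> *v Xs s \<omega> + Es s \<omega>)"
  define c where "c = opnorm (matrix_inv A0)"
  define Kp where "Kp = real CARD('p) * real CARD('p)"
  define L where "L = 4*c^2*Kp^2*norm \<mu>0"
  define B where "B = real CARD('q) * real CARD('p) * max BP 0"
  have Ainv: "invertible A0" using A_inv by (simp add: A0_def)
  have c0: "0 \<le> c" by (simp add: c_def opnorm_nonneg)
  have B0: "0 \<le> B" by (simp add: B_def)
  have L0: "0 \<le> L" by (simp add: L_def Kp_def)
  note meas[measurable]
  have Pb: "AE \<omega> in M. norm (Ps 0 \<omega>) \<le> B"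
    using P_bdd
  proof eventually_elim
    case (elim \<omega>)
    have "norm (Ps 0 \<omega>) \<le> real CARD('q) * real CARD('p) * opnorm (Ps 0 \<omega>)" by (rule norm_le_opnorm)
    also have "\<dots> \<le> real CARD('q) * real CARD('p) * max BP 0" using elim by (intro mult_left_mono) auto
    finally show ?case by (simp add: B_def)
  qed
  define W where "W = (\<lambda>s \<omega>. (Xs s \<omega>, Ps s \<omega>, Es s \<omega>))"
  have Wm: "W s \<in> borel_measurable M" for s unfolding W_def by measurable
  have ind: "indep_vars (\<lambda>_. borel) W UNIV" unfolding W_def by (rule iid_indep)
  have dist: "distr M borel (W s) = distr M borel (W 0)" for s unfolding W_def by (rule iid_dist)
  define ZA where "ZA = (\<lambda>t::((complex^'p) \<times> (complex^'p^'q) \<times> (complex^'q)). cadj (fst (snd t)) ** fst (snd t) - A0)"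
  define ZB where "ZB = (\<lambda>t::((complex^'p) \<times> (complex^'p^'q) \<times> (complex^'q)).
                       cadj (fst (snd t)) *v (fst (snd t) *v (fst t - \<mu>0) + snd (snd t)))"
  have ZAm: "ZA \<in> borel_measurable borel" unfolding ZA_def cadj_def matrix_matrix_mult_def
    by (intro borel_measurable_continuous_onI continuous_intros)
  have ZBm: "ZB \<in> borel_measurable borel" unfolding ZB_def cadj_def matrix_vector_mult_def
    by (intro borel_measurable_continuous_onI continuous_intros)
  define CP where "CP = real CARD('p) * real CARD('p) * (real CARD('q) * (real CARD('p) * real CARD('q) * B) * B)"
  have CP0: "0 \<le> CP" using B0 by (simp add: CP_def)
  have PPb: "AE \<omega> in M. norm (cadj (Ps 0 \<omega>) ** Ps 0 \<omega>) \<le> CP"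
    using Pb
  proof eventually_elim
    case (elim \<omega>)
    have n1: "norm (cadj (Ps 0 \<omega>)) \<le> real CARD('p) * real CARD('q) * B"
      using norm_cadj_le[of "Ps 0 \<omega>"] elim by (meson mult_left_mono of_nat_0_le_iff mult_nonneg_nonneg order_trans)
    have "norm (cadj (Ps 0 \<omega>) ** Ps 0 \<omega>)
       \<le> real CARD('p) * real CARD('p) * (real CARD('q) * norm (cadj (Ps 0 \<omega>)) * norm (Ps 0 \<omega>))"
      by (rule norm_matmul_le)
    also have "\<dots> \<le> CP" unfolding CP_def
      using n1 elim B0 by (intro mult_left_mono mult_mono) auto
    finally show ?case .
  qed
  have ZAWm[measurable]: "(\<lambda>\<omega>. ZA (W 0 \<omega>)) \<in> borel_measurable M"
    using measurable_comp[OF Wm ZAm] by (simp add: comp_def)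
  have ZAW: "ZA (W 0 \<omega>) = cadj (Ps 0 \<omega>) ** Ps 0 \<omega> - A0" for \<omega> by (simp add: ZA_def W_def)
  have PPint: "integrable M (\<lambda>\<omega>. cadj (Ps 0 \<omega>) ** Ps 0 \<omega>)"
    by (rule integrable_const_bound[OF PPb]) measurable
  have ZA_L2: "integrable M (\<lambda>\<omega>. (norm (ZA (W 0 \<omega>)))\<^sup>2)"
  proof (rule integrable_const_bound[where B="(CP + norm A0)\<^sup>2"])
    show "AE \<omega> in M. norm ((norm (ZA (W 0 \<omega>)))\<^sup>2) \<le> (CP + norm A0)\<^sup>2"
      using PPb
    proof eventually_elim
      case (elim \<omega>)
      have "norm (ZA (W 0 \<omega>)) \<le> CP + norm A0"
        unfolding ZAW using norm_triangle_ineq4[of "cadj (Ps 0 \<omega>) ** Ps 0 \<omega>" A0] elim by linarith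
      then show ?case by (simp add: power_mono)
    qed
  qed measurable
  have ZA_mean: "integral\<^sup>L M (\<lambda>\<omega>. ZA (W 0 \<omega>)) = 0"
  proof -
    have "integral\<^sup>L M (\<lambda>\<omega>. ZA (W 0 \<omega>)) = integral\<^sup>L M (\<lambda>\<omega>. cadj (Ps 0 \<omega>) ** Ps 0 \<omega>) - integral\<^sup>L M (\<lambda>\<omega>. A0)"
      unfolding ZAW by (rule Bochner_Integration.integral_diff[OF PPint]) simp
    also have "\<dots> = 0" by (simp add: A0_def prob_space)
    finally show ?thesis .
  qed
  have ZBWm[measurable]: "(\<lambda>\<omega>. ZB (W 0 \<omega>)) \<in> borel_measurable M"
    using measurable_comp[OF Wm ZBm] by (simp add: comp_def)
  have ZBW: "ZB (W 0 \<omega>) = cadj (Ps 0 \<omega>) *v (Ps 0 \<omega> *v (Xs 0 \<omega> - \<mu>0) + Es 0 \<omega>)" for \<omega>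
    by (simp add: ZB_def W_def)
  have U: "UNIV \<in> sets borel" by (metis sets.top space_borel)
  have spE: "{\<omega> \<in> space M. Es 0 \<omega> \<in> UNIV} = space M" "{\<omega> \<in> space M. Xs 0 \<omega> \<in> UNIV} = space M" by auto
  have indPX: "measure M {\<omega> \<in> space M. Ps 0 \<omega> \<in> A \<and> Xs 0 \<omega> \<in> B'} =
      measure M {\<omega> \<in> space M. Ps 0 \<omega> \<in> A} * measure M {\<omega> \<in> space M. Xs 0 \<omega> \<in> B'}"
    if "A \<in> sets borel" "B' \<in> sets borel" for A B'
  proof -
    have e: "{\<omega> \<in> space M. Ps 0 \<omega> \<in> A \<and> Xs 0 \<omega> \<in> B'} = {\<omega> \<in> space M. Xs 0 \<omega> \<in> B' \<and> Ps 0 \<omega> \<in> A \<and> Es 0 \<omega> \<in> UNIV}"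
      by auto
    show ?thesis unfolding e indep_XPE[OF that(2) that(1) U] spE prob_space by simp
  qed
  have indPE: "measure M {\<omega> \<in> space M. Ps 0 \<omega> \<in> A \<and> Es 0 \<omega> \<in> B'} =
      measure M {\<omega> \<in> space M. Ps 0 \<omega> \<in> A} * measure M {\<omega> \<in> space M. Es 0 \<omega> \<in> B'}"
    if "A \<in> sets borel" "B' \<in> sets borel" for A B'
  proof -
    have e: "{\<omega> \<in> space M. Ps 0 \<omega> \<in> A \<and> Es 0 \<omega> \<in> B'} = {\<omega> \<in> space M. Xs 0 \<omega> \<in> UNIV \<and> Ps 0 \<omega> \<in> A \<and> Es 0 \<omega> \<in> B'}"
      by auto
    show ?thesis unfolding e indep_XPE[OF U that(1) that(2)] spE prob_space by simp
  qed
  have mZB: "integrable M (\<lambda>\<omega>. cadj (Ps 0 \<omega>) *v (Ps 0 \<omega> *v (Xs 0 \<omega> - \<mu>0) + Es 0 \<omega>)) \<and>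
         integral\<^sup>L M (\<lambda>\<omega>. cadj (Ps 0 \<omega>) *v (Ps 0 \<omega> *v (Xs 0 \<omega> - \<mu>0) + Es 0 \<omega>)) = 0"
    by (rule mean_ZB[OF prob meas(1) meas(2) meas(3) indPX indPE X_int X_mean E_int E_mean Pb])
  have ZB_mean: "integral\<^sup>L M (\<lambda>\<omega>. ZB (W 0 \<omega>)) = 0" unfolding ZBW using mZB by blast
  define CB where "CB = real CARD('p) * real CARD('q) * (real CARD('p) * real CARD('q)) * B *
                        (real CARD('p) * real CARD('q) * B + 1)"
  have ZB_L2: "integrable M (\<lambda>\<omega>. (norm (ZB (W 0 \<omega>)))\<^sup>2)"
  proof (rule Bochner_Integration.integrable_bound[where f="\<lambda>\<omega>. 2*CB\<^sup>2*((norm (Xs 0 \<omega> - \<mu>0))\<^sup>2 + (norm (Es 0 \<omega>))\<^sup>2)"])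
    show "integrable M (\<lambda>\<omega>. 2*CB\<^sup>2*((norm (Xs 0 \<omega> - \<mu>0))\<^sup>2 + (norm (Es 0 \<omega>))\<^sup>2))"
      by (intro integrable_mult_right Bochner_Integration.integrable_add X_L2 E_L2)
    show "AE \<omega> in M. norm ((norm (ZB (W 0 \<omega>)))\<^sup>2) \<le> norm (2*CB\<^sup>2*((norm (Xs 0 \<omega> - \<mu>0))\<^sup>2 + (norm (Es 0 \<omega>))\<^sup>2))"
      using Pb
    proof eventually_elim
      case (elim \<omega>)
      define a where "a = norm (Xs 0 \<omega> - \<mu>0)"
      define b where "b = norm (Es 0 \<omega>)"
      have a0: "0 \<le> a" and b0: "0 \<le> b" by (simp_all add: a_def b_def)
      have CB0: "0 \<le> CB" using B0 by (simp add: CB_def)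
      have h: "norm (ZB (W 0 \<omega>)) \<le> CB * (a + b)"
        unfolding ZBW a_def b_def CB_def using ZB_bound[OF elim, of "Xs 0 \<omega> - \<mu>0" "Es 0 \<omega>"] by simp
      have "(norm (ZB (W 0 \<omega>)))\<^sup>2 \<le> (CB * (a + b))\<^sup>2" using h by (simp add: power_mono)
      also have "\<dots> = CB\<^sup>2 * (a + b)\<^sup>2" by (simp add: power_mult_distrib)
      also have "\<dots> \<le> CB\<^sup>2 * (2 * (a\<^sup>2 + b\<^sup>2))"
      proof (rule mult_left_mono)
        have "0 \<le> (a - b)\<^sup>2" by simp
        then show "(a + b)\<^sup>2 \<le> 2 * (a\<^sup>2 + b\<^sup>2)" by (simp add: power2_eq_square algebra_simps)
      qed simp
      finally have "(norm (ZB (W 0 \<omega>)))\<^sup>2 \<le> 2*CB\<^sup>2*(a\<^sup>2 + b\<^sup>2)" by (simp add: algebra_simps)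
      then show ?case by (simp add: a_def b_def)
    qed
  qed measurable
  define VA where "VA = integral\<^sup>L M (\<lambda>\<omega>. (norm (ZA (W 0 \<omega>)))\<^sup>2)"
  define VB where "VB = integral\<^sup>L M (\<lambda>\<omega>. (norm (ZB (W 0 \<omega>)))\<^sup>2)"
  have VA0: "0 \<le> VA" unfolding VA_def by simp
  have VB0: "0 \<le> VB" unfolding VB_def by simp
  have SA: "integrable M (\<lambda>\<omega>. (norm (\<Sum>s<n. ZA (W s \<omega>)))\<^sup>2) \<and>
         integral\<^sup>L M (\<lambda>\<omega>. (norm (\<Sum>s<n. ZA (W s \<omega>)))\<^sup>2) = real n * VA" for n
    unfolding VA_def by (rule iid_sum_norm_sq[OF prob Wm ind dist ZAm ZA_L2 ZA_mean])
  have SB: "integrable M (\<lambda>\<omega>. (norm (\<Sum>s<n. ZB (W s \<omega>)))\<^sup>2) \<and>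
         integral\<^sup>L M (\<lambda>\<omega>. (norm (\<Sum>s<n. ZB (W s \<omega>)))\<^sup>2) = real n * VB" for n
    unfolding VB_def by (rule iid_sum_norm_sq[OF prob Wm ind dist ZBm ZB_L2 ZB_mean])
  define mu where "mu n \<omega> = mu_n A0 Ps Is n \<omega>" for n \<omega>
  define G where "G n \<omega> = c / sqrt (real n) + c / (real n * sqrt (real n)) * (norm (\<Sum>s<n. ZB (W s \<omega>)))\<^sup>2
                    + L / (real n)\<^sup>2 * (norm (\<Sum>s<n. ZA (W s \<omega>)))\<^sup>2" for n \<omega>
  have mu_G: "mu n \<omega> = Gfun (2*c) (A_n Ps n \<omega>) (b_n Ps Is n \<omega>)" for n \<omega>
    by (simp add: mu_def mu_n_def Gfun_def c_def)
  have mum: "mu n \<in> borel_measurable M" for n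
  proof -
    have Am: "(\<lambda>\<omega>. A_n Ps n \<omega>) \<in> borel_measurable M" unfolding A_n_def by measurable
    have bm: "(\<lambda>\<omega>. b_n Ps Is n \<omega>) \<in> borel_measurable M" unfolding b_n_def Is_def by measurable
    have "(\<lambda>\<omega>. Gfun (2*c) (A_n Ps n \<omega>) (b_n Ps Is n \<omega>)) \<in> borel_measurable M"
      by (rule borel_Gfun[OF Am bm])
    moreover have "mu n = (\<lambda>\<omega>. Gfun (2*c) (A_n Ps n \<omega>) (b_n Ps Is n \<omega>))" by (simp add: fun_eq_iff mu_G)
    ultimately show ?thesis by simp
  qed
  have kb: "norm (Gfun (2*c) Mx bx - mx) \<le> 2*c*norm (bx - Mx *v mx) + 4*c^2*Kp^2*norm mx*(norm (Mx - A0))^2"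
    for Mx :: "complex^'p^'p" and bx mx
    unfolding c_def Kp_def by (rule key_bound[OF Ainv])
  have ptw: "norm (mu n \<omega> - \<mu>0) \<le> G n \<omega>" if n0: "n > 0" for n \<omega>
  proof -
    define x where "x = norm (\<Sum>s<n. ZB (W s \<omega>))"
    define y where "y = norm (\<Sum>s<n. ZA (W s \<omega>))"
    have x0: "0 \<le> x" by (simp add: x_def)
    have e1: "A_n Ps n \<omega> - A0 = (1 / real n) *\<^sub>R (\<Sum>s<n. ZA (W s \<omega>))"
      using An_diff[OF n0, of Ps \<omega> A0] by (simp add: ZA_def W_def)
    have e2: "b_n Ps Is n \<omega> - A_n Ps n \<omega> *v \<mu>0 = (1 / real n) *\<^sub>R (\<Sum>s<n. ZB (W s \<omega>))"
      using bn_diff[OF n0, of Ps Xs Es \<omega> \<mu>0] by (simp add: ZB_def W_def Is_def)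
    have n1: "norm (A_n Ps n \<omega> - A0) = y / real n" unfolding e1 y_def by simp
    have n2: "norm (b_n Ps Is n \<omega> - A_n Ps n \<omega> *v \<mu>0) = x / real n" unfolding e2 x_def by simp
    have "norm (mu n \<omega> - \<mu>0) \<le> 2*c*(x / real n) + 4*c^2*Kp^2*norm \<mu>0*(y / real n)^2"
      using kb[of "A_n Ps n \<omega>" "b_n Ps Is n \<omega>" \<mu>0] unfolding mu_G n1 n2 .
    also have "2*c*(x / real n) = c * (2 * x / real n)" by simp
    also have "c * (2 * x / real n) \<le> c * (1 / sqrt (real n) + x\<^sup>2 / (real n * sqrt (real n)))"
      using amgm_sqrt[of "real n" x] n0 x0 c0 by (intro mult_left_mono) auto
    also have "4*c^2*Kp^2*norm \<mu>0*(y / real n)^2 = L / (real n)\<^sup>2 * y\<^sup>2"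
      by (simp add: L_def power_divide)
    finally show ?thesis unfolding G_def x_def[symmetric] y_def[symmetric]
      by (simp add: algebra_simps)
  qed
  have SAI: "integrable M (\<lambda>\<omega>. (norm (\<Sum>s<n. ZA (W s \<omega>)))\<^sup>2)" for n using SA by blast
  have SBI: "integrable M (\<lambda>\<omega>. (norm (\<Sum>s<n. ZB (W s \<omega>)))\<^sup>2)" for n using SB by blast
  have SAE: "integral\<^sup>L M (\<lambda>\<omega>. (norm (\<Sum>s<n. ZA (W s \<omega>)))\<^sup>2) = real n * VA" for n using SA by blast
  have SBE: "integral\<^sup>L M (\<lambda>\<omega>. (norm (\<Sum>s<n. ZB (W s \<omega>)))\<^sup>2) = real n * VB" for n using SB by blast
  have Gint: "integrable M (G n)" for n
    unfolding G_def
    by (intro Bochner_Integration.integrable_add integrable_mult_right SAI SBI integrable_const)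
  have EG: "integral\<^sup>L M (G n) \<le> (c + c * VB + L * VA) / sqrt (real n)" if n0: "n > 0" for n
  proof -
    have "integral\<^sup>L M (G n) = c / sqrt (real n) + c / (real n * sqrt (real n)) * (real n * VB)
            + L / (real n)\<^sup>2 * (real n * VA)"
      unfolding G_def
      by (simp add: Bochner_Integration.integral_add integrable_mult_right SAI SBI SAE SBE prob_space)
    also have "c / (real n * sqrt (real n)) * (real n * VB) = c * VB / sqrt (real n)" using n0 by simp
    also have "L / (real n)\<^sup>2 * (real n * VA) = L * VA / real n" using n0 by (simp add: power2_eq_square)
    also have "L * VA / real n \<le> L * VA / sqrt (real n)"
    proof (rule divide_left_mono)
      have "real n \<le> real n * real n" using n0 by simp
      then have "sqrt (real n) \<le> sqrt (real n * real n)" by (rule real_sqrt_le_mono)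
      then show "sqrt (real n) \<le> real n" by simp
      show "0 \<le> L * VA" using L0 VA0 by simp
      show "0 < real n * sqrt (real n)" using n0 by simp
    qed
    finally show ?thesis by (simp add: add_divide_distrib)
  qed
  define Ctot where "Ctot = c + c * VB + L * VA"
  note mum[measurable]
  have int_n: "integrable M (\<lambda>\<omega>. norm (mu n \<omega> - \<mu>0))" for n
  proof (cases "n = 0")
    case True
    have "(\<lambda>\<omega>. norm (mu n \<omega> - \<mu>0)) = (\<lambda>\<omega>. norm (Gfun (2*c) 0 0 - \<mu>0))"
      using True by (simp add: fun_eq_iff mu_G A_n_def b_n_def)
    then show ?thesis by simp
  next
    case False
    then have n0: "n > 0" by simp
    show ?thesis
    proof (rule Bochner_Integration.integrable_bound[OF Gint])
      show "AE \<omega> in M. norm (norm (mu n \<omega> - \<mu>0)) \<le> norm (G n \<omega>)"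
        by (intro AE_I2) (simp add: order_trans[OF ptw[OF n0] abs_ge_self])
    qed measurable
  qed
  have Eb: "integral\<^sup>L M (\<lambda>\<omega>. norm (mu n \<omega> - \<mu>0)) \<le> Ctot / sqrt (real n)" if n0: "n > 0" for n
  proof -
    have "integral\<^sup>L M (\<lambda>\<omega>. norm (mu n \<omega> - \<mu>0)) \<le> integral\<^sup>L M (G n)"
      by (rule integral_mono[OF int_n Gint]) (rule ptw[OF n0])
    also have "\<dots> \<le> Ctot / sqrt (real n)" unfolding Ctot_def by (rule EG[OF n0])
    finally show ?thesis .
  qed
  have Enn: "0 \<le> integral\<^sup>L M (\<lambda>\<omega>. norm (mu n \<omega> - \<mu>0))" for n by simp
  have bigO: "(\<lambda>n. integral\<^sup>L M (\<lambda>\<omega>. norm (mu n \<omega> - \<mu>0))) \<in> O(\<lambda>n. 1 / sqrt (real n))"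
  proof (rule bigoI[where c=Ctot])
    show "\<forall>\<^sub>F n in at_top. norm (integral\<^sup>L M (\<lambda>\<omega>. norm (mu n \<omega> - \<mu>0))) \<le> Ctot * norm (1 / sqrt (real n))"
    proof (rule eventually_at_top_linorderI[where c=1])
      fix n :: nat assume "1 \<le> n"
      then have n0: "n > 0" by simp
      have "norm (integral\<^sup>L M (\<lambda>\<omega>. norm (mu n \<omega> - \<mu>0))) = integral\<^sup>L M (\<lambda>\<omega>. norm (mu n \<omega> - \<mu>0))"
        using Enn[of n] by simp
      also have "\<dots> \<le> Ctot / sqrt (real n)" by (rule Eb[OF n0])
      also have "\<dots> = Ctot * norm (1 / sqrt (real n))" by simp
      finally show "norm (integral\<^sup>L M (\<lambda>\<omega>. norm (mu n \<omega> - \<mu>0))) \<le> Ctot * norm (1 / sqrt (real n))" .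
    qed
  qed
  have conv: "\<forall>\<epsilon>>0. (\<lambda>n. measure M {\<omega> \<in> space M. norm (mu n \<omega> - \<mu>0) > \<epsilon>}) \<longlonglongrightarrow> 0"
  proof (intro allI impI)
    fix e :: real assume e0: "e > 0"
    have lim: "(\<lambda>n. Ctot / e * (1 / sqrt (real n))) \<longlonglongrightarrow> 0"
      using tendsto_mult[OF tendsto_const[of "Ctot / e"] lim_inv_sqrt] by simp
    show "(\<lambda>n. measure M {\<omega> \<in> space M. norm (mu n \<omega> - \<mu>0) > e}) \<longlonglongrightarrow> 0"
    proof (rule tendsto_sandwich[OF _ _ tendsto_const lim])
      show "\<forall>\<^sub>F n in sequentially. 0 \<le> measure M {\<omega> \<in> space M. norm (mu n \<omega> - \<mu>0) > e}"
        by simp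
      show "\<forall>\<^sub>F n in sequentially. measure M {\<omega> \<in> space M. norm (mu n \<omega> - \<mu>0) > e} \<le> Ctot / e * (1 / sqrt (real n))"
      proof (rule eventually_sequentiallyI[where c=1])
        fix n :: nat assume "1 \<le> n"
        then have n0: "n > 0" by simp
        have sm: "{\<omega> \<in> space M. e \<le> norm (mu n \<omega> - \<mu>0)} \<in> sets M" by measurable
        have "measure M {\<omega> \<in> space M. norm (mu n \<omega> - \<mu>0) > e} \<le> measure M {\<omega> \<in> space M. e \<le> norm (mu n \<omega> - \<mu>0)}"
          by (rule finite_measure_mono[OF _ sm]) auto
        also have "\<dots> \<le> integral\<^sup>L M (\<lambda>\<omega>. norm (mu n \<omega> - \<mu>0)) / e"
          by (rule integral_Markov_inequality_measure[OF int_n sets.top _ e0]) simp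
        also have "\<dots> \<le> (Ctot / sqrt (real n)) / e" using divide_right_mono[OF Eb[OF n0], of e] e0 by simp
        also have "\<dots> = Ctot / e * (1 / sqrt (real n))" by simp
        finally show "measure M {\<omega> \<in> space M. norm (mu n \<omega> - \<mu>0) > e} \<le> Ctot / e * (1 / sqrt (real n))" .
      qed
    qed
  qed
  show ?thesis using int_n bigO conv unfolding mu_def Is_def A0_def by blast
qed

end
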